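(* Let $\vec{q}=(q_1,q_2,\dots)$ with $q_i\ge0$, $\sum_iq_i=1$. Let $D\subseteq\{1,\dots,n-1\}$, $\lambda\vdash n$, and let $\beta_\lambda(D)$ be the number of standard Young tableaux of shape $\lambda$ with descent set $D$. Suppose $\beta_\lambda(D)\neq0$. Then for any fixed permutation $w\in S_n$ with $\mathrm{Des}(w^{-1})=D$ and RSK shape $\lambda$, the probability that a biased $\vec{q}$-shuffle produces $w$ equals the probability that a biased $\vec{q}$-shuffle produces a permutation $v$ whose RSK tableaux $(P(v),Q(v))$ satisfy $\mathrm{Des}(P(v))=D$ and $\mathrm{shape}(Q(v))=\lambda$, divided by $\beta_\lambda(D)f_\lambda$, where $f_\lambda$ is the number of standard Young tableaux of shape $\lambda$.
   Context: A biased riffle shuffle with parameters $\vec{q}$ on $n$ cards: cut the deck into consecutive piles of sizes $k_1,k_2,\dots$ with probability $\binom{n}{k_1,k_2,\dots}\prod_iq_i^{k_i}$, then drop cards one at a time, each time from a pile chosen with probability proportional to its current size. Concretely, the resulting permutation $w$ has the law of: a word $J$ of length $n$ with independent letters, letter $i$ with probability $q_i$; if $a_i$ is the number of $i$'s, place $1,\dots,a_1$ at the positions of the $1$'s left to right, the next $a_2$ integers at the positions of the $2$'s left to right, etc.; $w(p)$ is the integer at position $p$. The descent set of $w$ is $\{i:1\le i\le n-1,\ w(i)>w(i+1)\}$. The descent set of a standard Young tableau is the set of $i$ such that $i+1$ lies in a lower row than $i$. $P(v),Q(v)$ are the RSK insertion and recording tableaux of $v$ (row-inserting $v(1),\dots,v(n)$).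 *)

theory Defs
  imports "HOL-Analysis.Analysis"
begin

(* Permutations of {1..n} in one-line notation: w(p) = w ! (p-1). *)
definition is_perm :: "nat \<Rightarrow> nat list \<Rightarrow> bool" where
  "is_perm n w \<longleftrightarrow> length w = n \<and> distinct w \<and> set w = {1..n}"

definition perm_inv :: "nat list \<Rightarrow> nat list" where
  "perm_inv w = map (\<lambda>i. Suc (LEAST p. p < length w \<and> w ! p = i)) [1..<Suc (length w)]"

definition perm_des :: "nat list \<Rightarrow> nat set" where
  "perm_des w = {i. 1 \<le> i \<and> i < length w \<and> w ! (i - 1) > w ! i}"

(* Biased shuffle: the permutation determined by a word J (letters are naturals,
   letter i drawn with probability q i). *)
definition word_perm :: "nat list \<Rightarrow> nat list" where
  "word_perm J = map (\<lambda>p. Suc (card {p'. p' < length J \<and>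
       (J ! p' < J ! p \<or> (J ! p' = J ! p \<and> p' < p))})) [0..<length J]"

definition shuffle_prob :: "(nat \<Rightarrow> real) \<Rightarrow> nat \<Rightarrow> nat list set \<Rightarrow> real" where
  "shuffle_prob q n S = infsum (\<lambda>J. \<Prod>p<n. q (J ! p)) {J. length J = n \<and> word_perm J \<in> S}"

(* Tableaux: list of rows, row 0 on top (English convention) *)
type_synonym tableau = "nat list list"

definition shape :: "tableau \<Rightarrow> nat list" where
  "shape T = map length T"

definition is_partition :: "nat \<Rightarrow> nat list \<Rightarrow> bool" where
  "is_partition n lam \<longleftrightarrow> sum_list lam = n \<and> (\<forall>x\<in>set lam. 0 < x) \<and> sorted_wrt (\<ge>) lam"

definition is_SYT :: "nat list \<Rightarrow> tableau \<Rightarrow> bool" where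
  "is_SYT lam T \<longleftrightarrow> shape T = lam \<and> distinct (concat T)
     \<and> set (concat T) = {1..sum_list lam}
     \<and> (\<forall>r\<in>set T. sorted_wrt (<) r)
     \<and> (\<forall>i j. Suc i < length T \<and> j < length (T ! Suc i) \<longrightarrow> T ! i ! j < T ! Suc i ! j)"

definition row_of :: "tableau \<Rightarrow> nat \<Rightarrow> nat" where
  "row_of T k = (LEAST r. r < length T \<and> k \<in> set (T ! r))"

definition tab_des :: "tableau \<Rightarrow> nat set" where
  "tab_des T = {i. 1 \<le> i \<and> i < sum_list (shape T) \<and> row_of T (Suc i) > row_of T i}"

definition beta :: "nat list \<Rightarrow> nat set \<Rightarrow> nat" where
  "beta lam D = card {T. is_SYT lam T \<and> tab_des T = D}"

definition flam :: "nat list \<Rightarrow> nat" where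
  "flam lam = card {T. is_SYT lam T}"

fun row_ins :: "nat \<Rightarrow> nat list \<Rightarrow> nat list \<times> nat option" where
  "row_ins x [] = ([x], None)"
| "row_ins x (y # ys) = (if x < y then (x # ys, Some y)
      else (let (r, b) = row_ins x ys in (y # r, b)))"

fun tab_ins :: "nat \<Rightarrow> tableau \<Rightarrow> tableau \<times> nat" where
  "tab_ins x [] = ([[x]], 0)"
| "tab_ins x (r # rs) = (case row_ins x r of
      (r', None) \<Rightarrow> (r' # rs, 0)
    | (r', Some y) \<Rightarrow> (let (rs', i) = tab_ins y rs in (r' # rs', Suc i)))"

definition add_cell :: "nat \<Rightarrow> nat \<Rightarrow> tableau \<Rightarrow> tableau" where
  "add_cell i k Q = (if i < length Q then Q[i := Q ! i @ [k]] else Q @ [[k]])"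

fun rsk_aux :: "nat list \<Rightarrow> nat \<Rightarrow> tableau \<times> tableau \<Rightarrow> tableau \<times> tableau" where
  "rsk_aux [] k PQ = PQ"
| "rsk_aux (x # xs) k (P, Q) =
     (let (P', i) = tab_ins x P in rsk_aux xs (Suc k) (P', add_cell i k Q))"

definition rsk :: "nat list \<Rightarrow> tableau \<times> tableau" where
  "rsk v = rsk_aux v 1 ([], [])"

end

theory Submission
  imports Defs
begin


lemma row_ins_None: "row_ins x r = (r', None) \<Longrightarrow> r' = r @ [x] \<and> (\<forall>z\<in>set r. \<not> x < z)"
  by (induction x r arbitrary: r' rule: row_ins.induct) (auto split: if_splits prod.splits)

lemma row_ins_Some: "row_ins x r = (r', Some y) \<Longrightarrow>
   \<exists>a b. r = a @ y # b \<and> r' = a @ x # b \<and> x < y \<and> (\<forall>z\<in>set a. \<not> x < z)"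
proof (induction x r arbitrary: r' rule: row_ins.induct)
  case (1 x)
  then show ?case by simp
next
  case (2 x y0 ys)
  show ?case
  proof (cases "x < y0")
    case True
    then show ?thesis using 2(2) by (intro exI[of _ "[]"] exI[of _ ys]) auto
  next
    case False
    obtain r b where rb: "row_ins x ys = (r, b)" by fastforce
    with False 2(2) have r': "r' = y0 # r" and b: "b = Some y" by auto
    from 2(1)[OF False rb[unfolded b]] obtain a c where "ys = a @ y # c \<and> r = a @ x # c \<and> x < y \<and> (\<forall>z\<in>set a. \<not> x < z)" by blast
    then show ?thesis using False r' by (intro exI[of _ "y0 # a"] exI[of _ c]) auto
  qed
qed

lemma row_ins_cases:
  obtains (N) "row_ins x r = (r @ [x], None)" "\<forall>z\<in>set r. \<not> x < z"
  | (S) a y b where "r = a @ y # b" "row_ins x r = (a @ x # b, Some y)" "x < y" "\<forall>z\<in>set a. \<not> x < z"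
proof -
  obtain r' b where e: "row_ins x r = (r', b)" by fastforce
  show thesis
  proof (cases b)
    case None
    then show ?thesis using row_ins_None[of x r r'] e N by auto
  next
    case (Some y)
    then show ?thesis using row_ins_Some[of x r r' y] e S by auto
  qed
qed



definition domr :: "nat list \<Rightarrow> nat list \<Rightarrow> bool" where
  "domr r s \<longleftrightarrow> length s \<le> length r \<and> (\<forall>j<length s. r ! j < s ! j)"

fun tabl :: "tableau \<Rightarrow> bool" where
  "tabl [] = True"
| "tabl (r # rs) = (r \<noteq> [] \<and> sorted_wrt (<) r \<and> (case rs of [] \<Rightarrow> True | s # _ \<Rightarrow> domr r s) \<and> tabl rs)"

definition add_at :: "nat \<Rightarrow> nat list \<Rightarrow> nat list" where
  "add_at i l = (if i < length l then l[i := Suc (l ! i)] else l @ [1])"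

lemma sorted_nth_less: "sorted_wrt (<) r \<Longrightarrow> i < j \<Longrightarrow> j < length r \<Longrightarrow> r ! i < (r ! j :: nat)"
  by (simp add: sorted_wrt_iff_nth_less)

lemma col_lemma:
  assumes sr: "sorted_wrt (<) r" and d: "domr r s"
    and r: "r = a @ y # b" and xy: "x < y" and ax: "\<forall>z\<in>set a. z < x"
  shows "domr (a @ x # b) (fst (row_ins y s))"
proof -
  let ?j = "length a"
  have ry: "r ! ?j = y" using r by simp
  have lr: "?j < length r" using r by simp
  have r'k: "(a @ x # b) ! k \<le> r ! k" if "k < length r" for k
    using r xy by (cases "k = ?j") (auto simp: nth_append nth_Cons split: nat.splits)
  have r'lt: "(a @ x # b) ! k < y" if "k \<le> ?j" for k
  proof (cases "k = ?j")
    case True then show ?thesis using xy by simp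
  next
    case False
    then have "k < ?j" using that by simp
    then have "(a @ x # b) ! k = r ! k" using r by (simp add: nth_append)
    also have "r ! k < r ! ?j" using sorted_nth_less[OF sr \<open>k < ?j\<close> lr] .
    finally show ?thesis using ry by simp
  qed
  show ?thesis
  proof (cases rule: row_ins_cases[of y s])
    case N
    have ls: "length s \<le> ?j"
    proof (rule ccontr)
      assume "\<not> ?thesis"
      then have "r ! ?j < s ! ?j" using d unfolding domr_def by auto
      moreover have "s ! ?j \<in> set s" using \<open>\<not> _\<close> by auto
      ultimately show False using N(2) ry by auto
    qed
    show ?thesis unfolding N(1) domr_def fst_conv
    proof (intro conjI allI impI)
      show "length (s @ [y]) \<le> length (a @ x # b)" using ls r by simp
      fix k assume k: "k < length (s @ [y])"
      show "(a @ x # b) ! k < (s @ [y]) ! k"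
      proof (cases "k = length s")
        case True then show ?thesis using r'lt[of k] ls by (simp add: nth_append)
      next
        case False
        then have "k < length s" using k by simp
        then have "r ! k < s ! k" using d unfolding domr_def by auto
        moreover have "(a @ x # b) ! k \<le> r ! k" using r'k[of k] \<open>k < length s\<close> ls lr by simp
        ultimately show ?thesis using \<open>k < length s\<close> by (simp add: nth_append)
      qed
    qed
  next
    case (S c z e)
    have jc: "length c \<le> ?j"
    proof (rule ccontr)
      assume "\<not> ?thesis"
      then have "?j < length s" using S(1) by simp
      then have "r ! ?j < s ! ?j" using d unfolding domr_def by auto
      moreover have "s ! ?j \<in> set c" using \<open>\<not> _\<close> S(1) by (auto simp: nth_append)
      ultimately show False using S(4) ry by auto
    qed
    show ?thesis unfolding S(2) domr_def fst_conv
    proof (intro conjI allI impI)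
      show "length (c @ y # e) \<le> length (a @ x # b)" using d S(1) r unfolding domr_def by simp
      fix k assume k: "k < length (c @ y # e)"
      show "(a @ x # b) ! k < (c @ y # e) ! k"
      proof (cases "k = length c")
        case True then show ?thesis using r'lt[of k] jc by (simp add: nth_append)
      next
        case False
        have "k < length s" using k S(1) by simp
        then have "r ! k < s ! k" using d unfolding domr_def by auto
        moreover have "(c @ y # e) ! k = s ! k" using False S(1) by (auto simp: nth_append nth_Cons split: nat.splits)
        moreover have "k < length r" using \<open>k < length s\<close> d unfolding domr_def by simp
        ultimately show ?thesis using r'k[of k] by simp
      qed
    qed
  qed
qed

lemma tab_ins_Cons: "\<exists>rs' i. tab_ins x (r # rs) = (fst (row_ins x r) # rs', i)"
  by (auto split: prod.splits option.splits)

lemma tab_ins_mset: "mset (concat (fst (tab_ins x P))) = mset (concat P) + {#x#}"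
proof (induction x P rule: tab_ins.induct)
  case (1 x) then show ?case by simp
next
  case (2 x r rs)
  show ?case
  proof (cases rule: row_ins_cases[of x r])
    case N then show ?thesis by simp
  next
    case (S a y b)
    obtain rs' i where e: "tab_ins y rs = (rs', i)" by fastforce
    have "mset (concat rs') = mset (concat rs) + {#y#}" using 2(1)[OF S(2)[symmetric] refl] e by simp
    then show ?thesis using S e by simp
  qed
qed

lemma tab_ins_shape: "tab_ins x P = (P', i) \<Longrightarrow> shape P' = add_at i (shape P) \<and> i \<le> length P"
proof (induction x P arbitrary: P' i rule: tab_ins.induct)
  case (1 x) then show ?case by (auto simp: shape_def add_at_def)
next
  case (2 x r rs)
  show ?case
  proof (cases rule: row_ins_cases[of x r])
    case N then show ?thesis using 2(2) by (auto simp: shape_def add_at_def)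
  next
    case (S a y b)
    obtain rs' i' where e: "tab_ins y rs = (rs', i')" by fastforce
    have IH: "shape rs' = add_at i' (shape rs) \<and> i' \<le> length rs" using 2(1)[OF S(2)[symmetric] refl e] .
    have P': "P' = (a @ x # b) # rs'" "i = Suc i'" using 2(2) S e by auto
    show ?thesis using IH S(1) unfolding P' by (auto simp: shape_def add_at_def)
  qed
qed

lemma tab_ins_hd: "x \<in> set (hd (fst (tab_ins x P)))"
proof (cases P)
  case Nil then show ?thesis by simp
next
  case (Cons r rs)
  then show ?thesis using tab_ins_Cons[of x r rs]
    by (cases rule: row_ins_cases[of x r]) auto
qed

lemma tab_ins_tabl:
  assumes "tabl P" "distinct (concat P)" "x \<notin> set (concat P)"
  shows "tabl (fst (tab_ins x P))"
  using assms
proof (induction x P rule: tab_ins.induct)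
  case (1 x) then show ?case by simp
next
  case (2 x r rs)
  show ?case
  proof (cases rule: row_ins_cases[of x r])
    case N
    have "\<forall>z\<in>set r. z < x"
    proof
      fix z assume "z \<in> set r"
      then have "z \<noteq> x" "\<not> x < z" using N(2) 2(4) by auto
      then show "z < x" by simp
    qed
    then have "sorted_wrt (<) (r @ [x])" using 2(2) by (auto simp: sorted_wrt_append)
    moreover have "domr (r @ [x]) s" if "rs = s # ss" for s ss
      using 2(2) that by (auto simp: domr_def nth_append)
    ultimately show ?thesis using N 2(2) by (auto split: list.splits)
  next
    case (S a y b)
    obtain rs' i' where e: "tab_ins y rs = (rs', i')" by fastforce
    have yr: "y \<notin> set (concat rs)" using 2(3) S(1) by auto
    have IH: "tabl rs'" using 2(1)[OF S(2)[symmetric] refl] 2(2,3) yr e by simp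
    have ax: "\<forall>z\<in>set a. z < x"
    proof
      fix z assume "z \<in> set a"
      then have "z \<noteq> x" "\<not> x < z" using S(4) 2(4) S(1) by auto
      then show "z < x" by simp
    qed
    have sr: "sorted_wrt (<) r" using 2(2) by simp
    have sr': "sorted_wrt (<) (a @ x # b)" using sr S(1,3) ax by (auto simp: sorted_wrt_append)
    have d: "case rs' of [] \<Rightarrow> True | s' # _ \<Rightarrow> domr (a @ x # b) s'"
    proof (cases rs)
      case Nil
      then have "rs' = [[y]]" using e by simp
      moreover have "(a @ x # b) ! 0 < y"
        using S(1,3) sr by (cases a) (auto)
      ultimately show ?thesis by (simp add: domr_def)
    next
      case (Cons s ss)
      obtain ss' j where "tab_ins y (s # ss) = (fst (row_ins y s) # ss', j)" using tab_ins_Cons by blast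
      then have "rs' = fst (row_ins y s) # ss'" using e Cons by simp
      moreover have "domr r s" using 2(2) Cons by simp
      ultimately show ?thesis using col_lemma[OF sr _ S(1,3) ax] by simp
    qed
    have "fst (tab_ins x (r # rs)) = (a @ x # b) # rs'" using S e by simp
    then show ?thesis using IH sr' d by simp
  qed
qed



definition rev_row :: "nat \<Rightarrow> nat list \<Rightarrow> nat list \<times> nat" where
  "rev_row y r = (let a = takeWhile (\<lambda>z. z < y) r; b = dropWhile (\<lambda>z. z < y) r
     in (butlast a @ y # b, last a))"

fun del_ins :: "nat \<Rightarrow> tableau \<Rightarrow> tableau \<times> nat" where
  "del_ins i [] = ([], 0)"
| "del_ins 0 (r # rs) = ((if length r = 1 then rs else butlast r # rs), last r)"
| "del_ins (Suc i) (r # rs) = (let (rs', y) = del_ins i rs; (r', x) = rev_row y r in (r' # rs', x))"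

definition corner :: "nat \<Rightarrow> tableau \<Rightarrow> bool" where
  "corner i T \<longleftrightarrow> i < length T \<and> (Suc i < length T \<longrightarrow> length (T ! Suc i) < length (T ! i))"

lemma row_ins_bump: "\<forall>z\<in>set a. \<not> x < z \<Longrightarrow> x < y \<Longrightarrow> row_ins x (a @ y # b) = (a @ x # b, Some y)"
  by (induction a) auto

lemma row_ins_app: "\<forall>z\<in>set r. \<not> x < z \<Longrightarrow> row_ins x r = (r @ [x], None)"
  by (induction r) auto

lemma rev_row_char:
  assumes "sorted_wrt (<) (a @ x # b)" "x < y" "\<forall>z\<in>set b. y < z"
  shows "rev_row y (a @ x # b) = (a @ y # b, x)"
proof -
  have "\<forall>z\<in>set a. z < x" using assms(1) by (auto simp: sorted_wrt_append)
  then have "\<forall>z\<in>set a. z < y" using assms(2) by auto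
  then have t: "takeWhile (\<lambda>z. z < y) (a @ x # b) = a @ [x]"
    using assms(2,3) by (cases b) (auto simp: takeWhile_append2)
  have d: "dropWhile (\<lambda>z. z < y) (a @ x # b) = b"
    using \<open>\<forall>z\<in>set a. z < y\<close> assms(2,3) by (cases b) (auto simp: dropWhile_append2)
  show ?thesis unfolding rev_row_def Let_def t d by simp
qed

lemma split_below:
  fixes r :: "nat list"
  assumes "sorted_wrt (<) r" "z \<in> set r" "z < y" "y \<notin> set r"
  shows "\<exists>a x b. r = a @ x # b \<and> x < y \<and> (\<forall>z\<in>set b. y < z)"
  using assms
proof (induction r rule: rev_induct)
  case Nil then show ?case by simp
next
  case (snoc u r)
  show ?case
  proof (cases "u < y")
    case True
    then show ?thesis by (intro exI[of _ r] exI[of _ u] exI[of _ "[]"]) auto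
  next
    case False
    then have "u \<noteq> z" using snoc by auto
    then have "z \<in> set r" using snoc by auto
    from snoc.IH[OF _ this] snoc.prems obtain a x b where "r = a @ x # b \<and> x < y \<and> (\<forall>z\<in>set b. y < z)"
      by (auto simp: sorted_wrt_append)
    moreover have "y \<noteq> u" using snoc.prems(4) by auto
    then have "y < u" using False by simp
    ultimately have "r @ [u] = a @ x # (b @ [u]) \<and> x < y \<and> (\<forall>z\<in>set (b @ [u]). y < z)" by auto
    then show ?thesis by blast
  qed
qed

lemma FR:
  assumes "tabl P" "distinct (concat P)" "x \<notin> set (concat P)" "tab_ins x P = (P', i)"
  shows "del_ins i P' = (P, x)"
  using assms
proof (induction x P arbitrary: P' i rule: tab_ins.induct)
  case (1 x) then show ?case by auto
next
  case (2 x r rs)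
  show ?case
  proof (cases rule: row_ins_cases[of x r])
    case N
    then have "P' = (r @ [x]) # rs" "i = 0" using 2(5) by auto
    then show ?thesis using 2(2) by simp
  next
    case (S a y b)
    obtain rs' i' where e: "tab_ins y rs = (rs', i')" by fastforce
    have yr: "y \<notin> set (concat rs)" using 2(3) S(1) by auto
    have IH: "del_ins i' rs' = (rs, y)" using 2(1)[OF S(2)[symmetric] refl] 2(2,3) yr e by simp
    have P': "P' = (a @ x # b) # rs'" "i = Suc i'" using S e 2(5) by auto
    have ax: "\<forall>z\<in>set a. z < x"
    proof
      fix z assume "z \<in> set a"
      then have "z \<noteq> x" "\<not> x < z" using S(4) 2(4) S(1) by auto
      then show "z < x" by simp
    qed
    have sr: "sorted_wrt (<) r" using 2(2) by simp
    have sr': "sorted_wrt (<) (a @ x # b)" using sr S(1,3) ax by (auto simp: sorted_wrt_append)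
    have "\<forall>z\<in>set b. y < z" using sr S(1) by (auto simp: sorted_wrt_append)
    then have "rev_row y (a @ x # b) = (r, x)" using rev_row_char[OF sr' S(3)] S(1) by simp
    then show ?thesis using IH P' by simp
  qed
qed

lemma sorted_butlast_last: "sorted_wrt (<) r \<Longrightarrow> z \<in> set (butlast r) \<Longrightarrow> z < (last r :: nat)"
  by (metis append_butlast_last_id butlast.simps(1) empty_iff list.set(1) list.set_intros(1) sorted_wrt_append)

lemma RF:
  assumes "tabl P'" "distinct (concat P')" "corner i P'" "del_ins i P' = (P, x)"
  shows "tabl P \<and> tab_ins x P = (P', i) \<and> x \<in> set (hd P')"
  using assms
proof (induction P' arbitrary: i P x)
  case Nil then show ?case by (simp add: corner_def)
next
  case (Cons r rs)
  have rne: "r \<noteq> []" and sr: "sorted_wrt (<) r" using Cons.prems(1) by auto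
  show ?case
  proof (cases i)
    case 0
    have x: "x = last r" using Cons.prems(4) 0 by simp
    have cr: "rs \<noteq> [] \<Longrightarrow> length (hd rs) < length r" using Cons.prems(3) 0 by (cases rs) (auto simp: corner_def)
    show ?thesis
    proof (cases "length r = 1")
      case True
      have "rs = []"
      proof (rule ccontr)
        assume "rs \<noteq> []"
        then obtain s ss where "rs = s # ss" by (cases rs) auto
        then show False using cr True Cons.prems(1) by simp
      qed
      moreover have "r = [x]" using True x by (cases r) auto
      ultimately show ?thesis using Cons.prems(4) 0 by simp
    next
      case False
      have P: "P = butlast r # rs" using Cons.prems(4) 0 False by simp
      have r: "r = butlast r @ [x]" using x rne by simp
      have lt: "\<forall>z\<in>set (butlast r). \<not> x < z" using sorted_butlast_last[OF sr] x by fastforce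
      have bne: "butlast r \<noteq> []" using False rne by (cases r) auto
      have sb: "sorted_wrt (<) (butlast r)" using sr r by (metis sorted_wrt_append)
      have db: "domr (butlast r) s" if "rs = s # ss" for s ss
      proof -
        have "domr r s" using Cons.prems(1) that by simp
        moreover have "length s < length r" using cr that by simp
        ultimately show ?thesis unfolding domr_def by (auto simp: nth_butlast)
      qed
      have "tabl P" using P bne sb db Cons.prems(1) by (auto split: list.splits)
      moreover have "tab_ins x P = (r # rs, i)"
      proof -
        have "row_ins x (butlast r) = (r, None)" using row_ins_app[OF lt] r by simp
        then show ?thesis using P 0 by simp
      qed
      ultimately show ?thesis using x rne by simp
    qed
  next
    case (Suc i')
    obtain s ss where rs: "rs = s # ss" using Cons.prems(3) Suc by (cases rs) (auto simp: corner_def)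
    obtain rs0 y where e: "del_ins i' rs = (rs0, y)" by fastforce
    have cr: "corner i' rs" using Cons.prems(3) Suc by (auto simp: corner_def)
    have IH: "tabl rs0 \<and> tab_ins y rs0 = (rs, i') \<and> y \<in> set (hd rs)"
      using Cons.IH[OF _ _ cr e] Cons.prems(1,2) by simp
    have ys: "y \<in> set s" using IH rs by simp
    have d: "domr r s" using Cons.prems(1) rs by simp
    obtain jc where jc: "jc < length s" "s ! jc = y" using ys by (meson in_set_conv_nth)
    have rjc: "r ! jc < y" "jc < length r" using d jc unfolding domr_def by auto
    have yr: "y \<notin> set r" using Cons.prems(2) rs ys by auto
    obtain a x' b where r: "r = a @ x' # b" "x' < y" "\<forall>z\<in>set b. y < z"
      using split_below[OF sr _ rjc(1) yr] rjc(2) nth_mem by blast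
    have rr: "rev_row y r = (a @ y # b, x')" using rev_row_char[OF _ r(2,3)] sr r(1) by simp
    have P: "P = (a @ y # b) # rs0" and x: "x = x'" using Cons.prems(4) Suc e rr by auto
    have ax: "\<forall>z\<in>set a. z < x'" using sr r(1) by (auto simp: sorted_wrt_append)
    have sr0: "sorted_wrt (<) (a @ y # b)" using ax r sr by (auto simp: sorted_wrt_append)
    have jca: "jc \<le> length a"
    proof (rule ccontr)
      assume "\<not> ?thesis"
      then have "r ! jc \<in> set b" using r(1) rjc(2) by (auto simp: nth_append nth_Cons split: nat.splits)
      then show False using r(3) rjc(1) by auto
    qed
    have ss: "sorted_wrt (<) s" using Cons.prems(1) rs by simp
    have dom0: "domr (a @ y # b) s0" if "rs0 = s0 # ss0" for s0 ss0
    proof -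
      obtain ss' j where "tab_ins y (s0 # ss0) = (fst (row_ins y s0) # ss', j)" using tab_ins_Cons by blast
      then have s: "s = fst (row_ins y s0)" using IH that rs by simp
      show ?thesis
      proof (cases rule: row_ins_cases[of y s0])
        case N
        then have s': "s = s0 @ [y]" using s by simp
        have "distinct s" using ss by (simp add: strict_sorted_iff)
        moreover have "s ! length s0 = y" "length s0 < length s" using s' by auto
        ultimately have "jc = length s0" using jc nth_eq_iff_index_eq by metis
        show ?thesis unfolding domr_def
        proof (intro conjI allI impI)
          show "length s0 \<le> length (a @ y # b)" using d s' r(1) unfolding domr_def by simp
          fix k assume k: "k < length s0"
          then have "r ! k < s ! k" using d s' unfolding domr_def by auto
          moreover have "k < length a" using k \<open>jc = length s0\<close> jca by simp
          ultimately show "(a @ y # b) ! k < s0 ! k" using r(1) s' k by (simp add: nth_append)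
        qed
      next
        case (S c z e)
        then have s': "s = c @ y # e" using s by simp
        have "distinct s" using ss by (simp add: strict_sorted_iff)
        moreover have "s ! length c = y" "length c < length s" using s' by auto
        ultimately have "jc = length c" using jc nth_eq_iff_index_eq by metis
        show ?thesis unfolding domr_def
        proof (intro conjI allI impI)
          show "length s0 \<le> length (a @ y # b)" using d s' S(1) r(1) unfolding domr_def by simp
          fix k assume k: "k < length s0"
          show "(a @ y # b) ! k < s0 ! k"
          proof (cases "k = length a")
            case True
            show ?thesis
            proof (cases "k = length c")
              case True then show ?thesis using \<open>k = length a\<close> S by (simp add: nth_append)
            next
              case False
              then have "k > length c" using \<open>jc = length c\<close> jca \<open>k = length a\<close> by simp
              then have "s ! k > s ! length c" using sorted_nth_less[OF ss, of "length c" k] k S(1) s' by simp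
              moreover have "s0 ! k = s ! k" using S(1) s' \<open>k > length c\<close> by (simp add: nth_append)
              ultimately show ?thesis using True s' by (simp add: nth_append)
            qed
          next
            case False
            have "k < length s" using k S(1) s' by simp
            then have "r ! k < s ! k" using d unfolding domr_def by auto
            moreover have "r ! k = (a @ y # b) ! k" using False r(1) by (auto simp: nth_append nth_Cons split: nat.splits)
            moreover have "s ! k \<le> s0 ! k" using S s' by (cases "k = length c") (auto simp: nth_append nth_Cons split: nat.splits)
            ultimately show ?thesis by simp
          qed
        qed
      qed
    qed
    have "tabl P" using P sr0 dom0 IH by (auto split: list.splits)
    moreover have "tab_ins x P = (r # rs, i)"
    proof -
      have "\<forall>z\<in>set a. \<not> x' < z" using ax by auto
      then have "row_ins x' (a @ y # b) = (r, Some y)" using row_ins_bump r by simp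
      then show ?thesis using P x IH Suc by simp
    qed
    moreover have "x \<in> set (hd (r # rs))" using r x by simp
    ultimately show ?thesis by simp
  qed
qed



fun rmc :: "nat \<Rightarrow> tableau \<Rightarrow> tableau" where
  "rmc i [] = []"
| "rmc 0 (r # rs) = (if length r = 1 then rs else butlast r # rs)"
| "rmc (Suc i) (r # rs) = r # rmc i rs"

fun rw :: "tableau \<Rightarrow> nat \<Rightarrow> nat" where
  "rw [] z = 0"
| "rw (r # rs) z = (if z \<in> set r then 0 else Suc (rw rs z))"

definition pshape :: "nat list \<Rightarrow> bool" where
  "pshape l \<longleftrightarrow> (\<forall>x\<in>set l. 0 < x) \<and> sorted_wrt (\<ge>) l"

lemma add_cell_simps:
  "add_cell 0 k (r # rs) = (r @ [k]) # rs"
  "add_cell (Suc i) k (r # rs) = r # add_cell i k rs"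
  "add_cell i k [] = [[k]]"
  by (auto simp: add_cell_def)

lemma shape_add_cell: "shape (add_cell i k Q) = add_at i (shape Q)"
  by (auto simp: add_cell_def add_at_def shape_def map_update)

lemma mset_add_cell: "i \<le> length Q \<Longrightarrow> mset (concat (add_cell i k Q)) = mset (concat Q) + {#k#}"
proof (induction Q arbitrary: i)
  case Nil then show ?case by (simp add: add_cell_simps)
next
  case (Cons r rs) then show ?case by (cases i) (auto simp: add_cell_simps)
qed

lemma tabl_pshape: "tabl T \<Longrightarrow> pshape (shape T)"
proof (induction T)
  case Nil then show ?case by (simp add: pshape_def shape_def)
next
  case (Cons r rs)
  have "\<forall>s\<in>set rs. length s \<le> length r"
  proof (cases rs)
    case Nil then show ?thesis by simp
  next
    case (Cons s ss)
    have "length s \<le> length r" using Cons.prems Cons by (simp add: domr_def)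
    moreover have "\<forall>t\<in>set ss. length t \<le> length s" using Cons.IH Cons.prems Cons by (simp add: pshape_def shape_def)
    ultimately show ?thesis using Cons by auto
  qed
  then show ?case using Cons by (auto simp: pshape_def shape_def)
qed

lemma tabl_add_cell:
  assumes "tabl Q" "\<forall>z\<in>set (concat Q). z < k" "i \<le> length Q" "pshape (add_at i (shape Q))"
  shows "tabl (add_cell i k Q)"
  using assms
proof (induction Q arbitrary: i)
  case Nil then show ?case by (simp add: add_cell_simps)
next
  case (Cons r rs)
  show ?case
  proof (cases i)
    case 0
    have "sorted_wrt (<) (r @ [k])" using Cons.prems by (auto simp: sorted_wrt_append)
    moreover have "domr (r @ [k]) s" if "rs = s # ss" for s ss
      using Cons.prems(1) that by (auto simp: domr_def nth_append)
    ultimately show ?thesis using 0 Cons.prems(1) by (auto simp: add_cell_simps split: list.splits)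
  next
    case (Suc i')
    have ps: "pshape (add_at i' (shape rs))" using Cons.prems(4) Suc
      by (auto simp: pshape_def add_at_def shape_def split: if_splits)
    have IH: "tabl (add_cell i' k rs)" using Cons.IH[OF _ _ _ ps] Cons.prems Suc by auto
    have hd: "length (hd (add_cell i' k rs)) \<le> length r"
    proof -
      have "add_at (Suc i') (shape (r # rs)) = length r # add_at i' (shape rs)"
        by (auto simp: add_at_def shape_def)
      moreover have "add_at i' (shape rs) = shape (add_cell i' k rs)" by (simp add: shape_add_cell)
      moreover obtain t ts where "add_cell i' k rs = t # ts" by (cases rs; cases i') (auto simp: add_cell_simps)
      ultimately show ?thesis using Cons.prems(4) Suc by (auto simp: pshape_def shape_def)
    qed
    have dm: "domr r t" if "add_cell i' k rs = t # ts" for t ts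
    proof (cases rs)
      case Nil
      then have "t = [k]" using that by (simp add: add_cell_simps)
      then show ?thesis using Cons.prems(1,2) by (cases r) (auto simp: domr_def)
    next
      case (Cons s ss)
      have dsr: "domr r s" using Cons Cons.prems(1) by simp
      show ?thesis
      proof (cases i')
        case 0
        then have "t = s @ [k]" using that Cons by (simp add: add_cell_simps)
        have "length t \<le> length r" using hd that by simp
        moreover have "r ! length s \<in> set r" using \<open>t = s @ [k]\<close> calculation by simp
        ultimately show ?thesis using dsr \<open>t = s @ [k]\<close> Cons.prems(2)
          by (auto simp: domr_def nth_append)
      next
        case (Suc i'')
        then have "t = s" using that Cons by (simp add: add_cell_simps)
        then show ?thesis using dsr by simp
      qed
    qed
    show ?thesis using Suc Cons.prems(1) IH dm by (auto simp: add_cell_simps split: list.splits)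
  qed
qed

lemma rw_add_cell: "i \<le> length Q \<Longrightarrow> k \<notin> set (concat Q) \<Longrightarrow> rw (add_cell i k Q) k = i"
proof (induction Q arbitrary: i)
  case Nil then show ?case by (simp add: add_cell_simps)
next
  case (Cons r rs) then show ?case by (cases i) (auto simp: add_cell_simps)
qed

lemma rmc_add_cell: "tabl Q \<Longrightarrow> i \<le> length Q \<Longrightarrow> rmc i (add_cell i k Q) = Q"
proof (induction Q arbitrary: i)
  case Nil then show ?case by (simp add: add_cell_simps)
next
  case (Cons r rs) then show ?case by (cases i) (auto simp: add_cell_simps)
qed

lemma max_corner:
  assumes "tabl Q" "M \<in> set (concat Q)" "\<forall>z\<in>set (concat Q). z \<le> M"
  shows "corner (rw Q M) Q \<and> last (Q ! rw Q M) = M"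
  using assms
proof (induction Q)
  case Nil then show ?case by simp
next
  case (Cons r rs)
  show ?case
  proof (cases "M \<in> set r")
    case True
    have sr: "sorted_wrt (<) r" "r \<noteq> []" using Cons.prems by auto
    have lM: "last r = M"
    proof (rule ccontr)
      assume "last r \<noteq> M"
      then have "M \<in> set (butlast r)" using True sr(2) by (metis append_butlast_last_id in_set_butlast_appendI rotate1.simps(2) set_ConsD set_rotate1)
      then have "M < last r" using sorted_butlast_last[OF sr(1)] by simp
      moreover have "last r \<le> M" using Cons.prems(3) sr(2) by simp
      ultimately show False by simp
    qed
    have "length s < length r" if "rs = s # ss" for s ss
    proof (rule ccontr)
      assume "\<not> ?thesis"
      then have "length r - 1 < length s" using sr(2) by (cases r) auto
      moreover have "domr r s" using Cons.prems(1) that by simp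
      ultimately have "r ! (length r - 1) < s ! (length r - 1)" by (simp add: domr_def)
      moreover have "r ! (length r - 1) = M" using lM sr(2) by (simp add: last_conv_nth)
      moreover have "s ! (length r - 1) \<in> set (concat (r # rs))" using \<open>length r - 1 < length s\<close> that by simp
      ultimately show False using Cons.prems(3) by fastforce
    qed
    then show ?thesis using True lM by (cases rs) (auto simp: corner_def)
  next
    case False
    have "corner (rw rs M) rs \<and> last (rs ! rw rs M) = M" using Cons False by simp
    then show ?thesis using False by (auto simp: corner_def)
  qed
qed

lemma rmc_corner:
  assumes "tabl Q" "corner i Q"
  shows "tabl (rmc i Q) \<and> add_cell i (last (Q ! i)) (rmc i Q) = Q \<and> i \<le> length (rmc i Q)
     \<and> mset (concat (rmc i Q)) + {#last (Q ! i)#} = mset (concat Q)"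
  using assms
proof (induction Q arbitrary: i)
  case Nil then show ?case by (simp add: corner_def)
next
  case (Cons r rs)
  have rne: "r \<noteq> []" and sr: "sorted_wrt (<) r" using Cons.prems by auto
  show ?case
  proof (cases i)
    case 0
    have cr: "rs \<noteq> [] \<Longrightarrow> length (hd rs) < length r" using Cons.prems(2) 0 by (cases rs) (auto simp: corner_def)
    show ?thesis
    proof (cases "length r = 1")
      case True
      have "rs = []"
      proof (rule ccontr)
        assume "rs \<noteq> []"
        then obtain s ss where "rs = s # ss" by (cases rs) auto
        then show False using cr True Cons.prems(1) by simp
      qed
      moreover have "r = [last r]" using True by (cases r) auto
      ultimately show ?thesis using 0 True by (simp add: add_cell_simps)
    next
      case False
      have r: "r = butlast r @ [last r]" using rne by simp
      have bne: "butlast r \<noteq> []" using False rne by (cases r) auto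
      have sb: "sorted_wrt (<) (butlast r)" using sr r by (metis sorted_wrt_append)
      have db: "domr (butlast r) s" if "rs = s # ss" for s ss
      proof -
        have "domr r s" using Cons.prems(1) that by simp
        moreover have "length s < length r" using cr that by simp
        ultimately show ?thesis unfolding domr_def by (auto simp: nth_butlast)
      qed
      have "tabl (butlast r # rs)" using bne sb db Cons.prems(1) by (auto split: list.splits)
      moreover have "mset (butlast r) + {#last r#} = mset r" using r by (metis mset.simps(1,2) mset_append add_mset_add_single union_commute)
      ultimately show ?thesis using 0 False r by (simp add: add_cell_simps)
    qed
  next
    case (Suc i')
    have c: "corner i' rs" using Cons.prems(2) Suc by (auto simp: corner_def)
    have IH: "tabl (rmc i' rs) \<and> add_cell i' (last (rs ! i')) (rmc i' rs) = rs \<and> i' \<le> length (rmc i' rs)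
     \<and> mset (concat (rmc i' rs)) + {#last (rs ! i')#} = mset (concat rs)" using Cons.IH[OF _ c] Cons.prems(1) by simp
    obtain s ss where rs: "rs = s # ss" using c by (cases rs) (auto simp: corner_def)
    have "domr r t" if "rmc i' rs = t # ts" for t ts
    proof (cases i')
      case 0
      then have "t = (if length s = 1 then hd ss else butlast s)" using that rs by (auto split: if_splits)
      have dr: "domr r s" using Cons.prems(1) rs by simp
      show ?thesis
      proof (cases "length s = 1")
        case True
        then have "ss = []" using c 0 rs Cons.prems(1)
          by (cases ss) (auto simp: corner_def)
        then show ?thesis using that rs 0 True by simp
      next
        case False
        then show ?thesis using dr \<open>t = _\<close> by (auto simp: domr_def nth_butlast)
      qed
    next
      case (Suc i'')
      then show ?thesis using that rs Cons.prems(1) by simp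
    qed
    then have "tabl (rmc i (r # rs))" using IH Suc Cons.prems(1) by (auto split: list.splits)
    then show ?thesis using IH Suc by (simp add: add_cell_simps)
  qed
qed



fun rsk_inv :: "nat \<Rightarrow> tableau \<times> tableau \<Rightarrow> nat list" where
  "rsk_inv 0 PQ = []"
| "rsk_inv (Suc m) (P, Q) = (let i = rw Q (Suc m); (P0, x) = del_ins i P in rsk_inv m (P0, rmc i Q) @ [x])"

definition okp :: "nat set \<Rightarrow> nat \<Rightarrow> tableau \<times> tableau \<Rightarrow> bool" where
  "okp A m PQ \<longleftrightarrow> tabl (fst PQ) \<and> distinct (concat (fst PQ)) \<and> set (concat (fst PQ)) = A
     \<and> tabl (snd PQ) \<and> distinct (concat (snd PQ)) \<and> set (concat (snd PQ)) = {1..m}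
     \<and> shape (fst PQ) = shape (snd PQ)"

lemma rsk_aux_snoc: "rsk_aux (xs @ [x]) k PQ =
  (let (P, Q) = rsk_aux xs k PQ; (P', i) = tab_ins x P in (P', add_cell i (k + length xs) Q))"
proof (induction xs arbitrary: k PQ)
  case Nil then show ?case by (cases PQ) (auto split: prod.splits)
next
  case (Cons a xs)
  obtain P Q where PQ: "PQ = (P, Q)" by fastforce
  obtain P1 i1 where e: "tab_ins a P = (P1, i1)" by fastforce
  show ?case using Cons[of "Suc k" "(P1, add_cell i1 k Q)"] PQ e by simp
qed

lemma rsk_snoc: "rsk (xs @ [x]) =
  (let (P, Q) = rsk xs; (P', i) = tab_ins x P in (P', add_cell i (Suc (length xs)) Q))"
  unfolding rsk_def by (simp add: rsk_aux_snoc)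

lemma length_rsk_inv: "length (rsk_inv m PQ) = m"
  by (induction m PQ rule: rsk_inv.induct) (auto simp: Let_def split: prod.splits)

lemma mset_add_distinct_iff: "mset xs = mset ys + {#x#} \<Longrightarrow> distinct xs \<longleftrightarrow> distinct ys \<and> x \<notin> set ys"
proof -
  assume "mset xs = mset ys + {#x#}"
  then have "mset xs = mset (x # ys)" by simp
  then have "distinct xs = distinct (x # ys)" by (rule mset_eq_imp_distinct_iff)
  then show ?thesis by auto
qed

lemma distinct_mset_add: "mset xs = mset ys + {#x#} \<Longrightarrow> distinct ys \<Longrightarrow> x \<notin> set ys \<Longrightarrow> distinct xs"
proof -
  assume a: "mset xs = mset ys + {#x#}" "distinct ys" "x \<notin> set ys"
  show ?thesis using mset_add_distinct_iff[OF a(1)] a(2,3) by simp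
qed

lemma set_mset_add: "mset xs = mset ys + {#x#} \<Longrightarrow> set xs = insert x (set ys)"
proof -
  assume "mset xs = mset ys + {#x#}"
  then have "mset xs = mset (x # ys)" by simp
  then have "set xs = set (x # ys)" by (rule mset_eq_setD)
  then show ?thesis by simp
qed

lemma add_at_len: "length (add_at i l) = (if i < length l then length l else Suc (length l))"
  by (simp add: add_at_def)

lemma add_at_inj_aux: "i < length l1 \<Longrightarrow> \<not> i < length l2 \<Longrightarrow> i \<le> length l2 \<Longrightarrow> \<forall>x\<in>set l1. 0 < x
   \<Longrightarrow> add_at i l1 = add_at i l2 \<Longrightarrow> False"
proof -
  assume a: "i < length l1" "\<not> i < length l2" "i \<le> length l2" "\<forall>x\<in>set l1. 0 < x" "add_at i l1 = add_at i l2"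
  have "add_at i l1 ! i = Suc (l1 ! i)" using a(1) by (simp add: add_at_def)
  moreover have "add_at i l2 ! i = 1" using a(2,3) by (simp add: add_at_def nth_append)
  ultimately have "l1 ! i = 0" using a(5) by simp
  then show False using a(1,4) nth_mem by fastforce
qed

lemma add_at_inj: "i \<le> length l1 \<Longrightarrow> i \<le> length l2 \<Longrightarrow> \<forall>x\<in>set l1. 0 < x \<Longrightarrow> \<forall>x\<in>set l2. 0 < x
  \<Longrightarrow> add_at i l1 = add_at i l2 \<Longrightarrow> l1 = l2"
proof -
  assume a: "i \<le> length l1" "i \<le> length l2" "\<forall>x\<in>set l1. 0 < x" "\<forall>x\<in>set l2. 0 < x" "add_at i l1 = add_at i l2"
  have "length l1 = length l2"
  proof (cases "i < length l1"; cases "i < length l2")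
    assume "i < length l1" "\<not> i < length l2"
    then show ?thesis using add_at_inj_aux a by blast
  next
    assume "\<not> i < length l1" "i < length l2"
    then show ?thesis using add_at_inj_aux[of i l2 l1] a by simp
  qed (use a add_at_len[of i l1] add_at_len[of i l2] in auto)
  then show ?thesis
  proof (cases "i < length l1")
    case True
    then have eq: "l1[i := Suc (l1 ! i)] = l2[i := Suc (l2 ! i)]" using a \<open>length l1 = length l2\<close> by (simp add: add_at_def)
    show ?thesis
    proof (rule nth_equalityI)
      show "length l1 = length l2" by fact
      fix j assume j: "j < length l1"
      have "l1[i := Suc (l1 ! i)] ! j = l2[i := Suc (l2 ! i)] ! j" by (simp add: eq)
      then show "l1 ! j = l2 ! j" using True j \<open>length l1 = length l2\<close> by (cases "j = i") auto
    qed
  next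
    case False
    then show ?thesis using a \<open>length l1 = length l2\<close> by (simp add: add_at_def)
  qed
qed

lemma Inv1: "distinct v \<Longrightarrow> okp (set v) (length v) (rsk v) \<and> rsk_inv (length v) (rsk v) = v"
proof (induction v rule: rev_induct)
  case Nil then show ?case by (simp add: okp_def rsk_def shape_def)
next
  case (snoc x u)
  obtain P Q where PQ: "rsk u = (P, Q)" by fastforce
  obtain P' i where e: "tab_ins x P = (P', i)" by fastforce
  let ?m = "length u"
  define Q' where "Q' = add_cell i (Suc ?m) Q"
  have r: "rsk (u @ [x]) = (P', Q')" using rsk_snoc[of u x] PQ e Q'_def by simp
  have IH: "okp (set u) ?m (P, Q)" "rsk_inv ?m (P, Q) = u" using snoc PQ by auto
  have xP: "x \<notin> set (concat P)" using IH snoc.prems unfolding okp_def by auto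
  have tP': "tabl P'" using tab_ins_tabl[of P x] IH xP e unfolding okp_def by auto
  have mP': "mset (concat P') = mset (concat P) + {#x#}" using tab_ins_mset[of x P] e by simp
  have sh: "shape P' = add_at i (shape P)" "i \<le> length P" using tab_ins_shape[OF e] by auto
  have "map length P = map length Q" using IH(1) unfolding okp_def shape_def by simp
  then have lPQ: "length P = length Q" by (metis length_map)
  have shQ: "shape Q' = shape P'" using sh IH unfolding Q'_def okp_def by (simp add: shape_add_cell)
  have mQ: "\<forall>z\<in>set (concat Q). z < Suc ?m" using IH unfolding okp_def by auto
  have sQ: "Suc ?m \<notin> set (concat Q)" using IH unfolding okp_def by auto
  have tQ': "tabl Q'" unfolding Q'_def
    using tabl_add_cell[of Q "Suc ?m" i] IH mQ sh lPQ tabl_pshape[OF tP'] shQ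
    unfolding okp_def by (simp add: Q'_def shape_add_cell)
  have mQ': "mset (concat Q') = mset (concat Q) + {#Suc ?m#}" using mset_add_cell sh lPQ unfolding Q'_def by simp
  have ok: "okp (set (u @ [x])) (length (u @ [x])) (P', Q')"
    unfolding okp_def fst_conv snd_conv
  proof (intro conjI)
    show "tabl P'" by (rule tP')
    show "distinct (concat P')" using distinct_mset_add[OF mP'] IH xP unfolding okp_def by auto
    show "set (concat P') = set (u @ [x])" using set_mset_add[OF mP'] IH unfolding okp_def by auto
    show "tabl Q'" by (rule tQ')
    have "distinct (concat Q)" using IH(1) unfolding okp_def by simp
    then show "distinct (concat Q')" using distinct_mset_add[OF mQ' _ sQ] by simp
    show "set (concat Q') = {1..length (u @ [x])}" using set_mset_add[OF mQ'] IH unfolding okp_def by auto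
    show "shape P' = shape Q'" using shQ by simp
  qed
  have "rw Q' (Suc ?m) = i" unfolding Q'_def using rw_add_cell sh lPQ sQ by simp
  moreover have "del_ins i P' = (P, x)" using FR[OF _ _ xP e] IH unfolding okp_def by auto
  moreover have "rmc i Q' = Q" unfolding Q'_def using rmc_add_cell IH sh lPQ unfolding okp_def by simp
  ultimately have "rsk_inv (length (u @ [x])) (P', Q') = u @ [x]" using IH by simp
  then show ?case using ok r by simp
qed

lemma tabl_empty: "tabl Q \<Longrightarrow> set (concat Q) = {} \<Longrightarrow> Q = []"
  by (cases Q) auto

lemma Inv2: "okp A m (P, Q) \<Longrightarrow> distinct (rsk_inv m (P, Q)) \<and> set (rsk_inv m (P, Q)) = A \<and> rsk (rsk_inv m (P, Q)) = (P, Q)"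
proof (induction m arbitrary: A P Q)
  case 0
  then have "Q = []" using tabl_empty unfolding okp_def by auto
  then have "P = []" using 0 unfolding okp_def shape_def by auto
  then show ?case using 0 \<open>Q = []\<close> unfolding okp_def by (simp add: rsk_def)
next
  case (Suc m)
  let ?i = "rw Q (Suc m)"
  have tQ: "tabl Q" and tP: "tabl P" using Suc.prems unfolding okp_def by auto
  have sQ: "set (concat Q) = {1..Suc m}" using Suc.prems unfolding okp_def by auto
  have "Suc m \<in> set (concat Q)" "\<forall>z\<in>set (concat Q). z \<le> Suc m" using sQ by auto
  then have mc: "corner ?i Q \<and> last (Q ! ?i) = Suc m" using max_corner[OF tQ, of "Suc m"] by blast
  define Q0 where "Q0 = rmc ?i Q"
  have rc: "tabl Q0" "add_cell ?i (Suc m) Q0 = Q" "?i \<le> length Q0" "mset (concat Q0) + {#Suc m#} = mset (concat Q)"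
    using rmc_corner[OF tQ conjunct1[OF mc]] conjunct2[OF mc] unfolding Q0_def by auto
  have lPQ: "map length P = map length Q" using Suc.prems unfolding okp_def shape_def by simp
  then have "length P = length Q" by (metis length_map)
  then have cP: "corner ?i P" using mc lPQ unfolding corner_def by (metis nth_map)
  obtain P0 x where e: "del_ins ?i P = (P0, x)" by fastforce
  have rf: "tabl P0" "tab_ins x P0 = (P, ?i)" using RF[OF tP _ cP e] Suc.prems unfolding okp_def by auto
  have mP: "mset (concat P) = mset (concat P0) + {#x#}" using tab_ins_mset[of x P0] rf by simp
  have dP: "distinct (concat P)" using Suc.prems unfolding okp_def by auto
  have dP0: "distinct (concat P0)" "x \<notin> set (concat P0)"
    using dP mset_add_distinct_iff[OF mP] by simp_all
  have sP: "set (concat P) = insert x (set (concat P0))" using set_mset_add[OF mP] .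
  have dQ: "distinct (concat Q)" using Suc.prems unfolding okp_def by auto
  have mQ: "mset (concat Q) = mset (concat Q0) + {#Suc m#}" using rc(4) by simp
  have dQ0: "distinct (concat Q0)" "Suc m \<notin> set (concat Q0)"
    using dQ mset_add_distinct_iff[OF mQ] by simp_all
  have sQ0: "set (concat Q0) = {1..m}"
  proof -
    have "insert (Suc m) (set (concat Q0)) = {1..Suc m}" using set_mset_add[OF mQ] Suc.prems unfolding okp_def by auto
    moreover have "{1..Suc m} = insert (Suc m) {1..m}" by auto
    ultimately have "insert (Suc m) (set (concat Q0)) = insert (Suc m) {1..m}" by simp
    moreover have "Suc m \<notin> {1..m}" by simp
    ultimately show ?thesis using dQ0(2) insert_ident by metis
  qed
  have shP: "shape P = add_at ?i (shape P0)" "?i \<le> length P0" using tab_ins_shape[OF rf(2)] by auto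
  have shQ: "shape Q = add_at ?i (shape Q0)" using rc(2) shape_add_cell by metis
  have sh0: "shape P0 = shape Q0"
  proof (rule add_at_inj[of ?i])
    show "?i \<le> length (shape P0)" using shP by (simp add: shape_def)
    show "?i \<le> length (shape Q0)" using rc(3) by (simp add: shape_def)
    show "\<forall>x\<in>set (shape P0). 0 < x" using tabl_pshape[OF rf(1)] by (simp add: pshape_def)
    show "\<forall>x\<in>set (shape Q0). 0 < x" using tabl_pshape[OF rc(1)] by (simp add: pshape_def)
    show "add_at ?i (shape P0) = add_at ?i (shape Q0)" using shP shQ Suc.prems unfolding okp_def by simp
  qed
  have ok0: "okp (set (concat P0)) m (P0, Q0)" unfolding okp_def using rf dP0 rc sQ0 dQ0 sh0 by simp
  have IH: "distinct (rsk_inv m (P0, Q0)) \<and> set (rsk_inv m (P0, Q0)) = set (concat P0) \<and> rsk (rsk_inv m (P0, Q0)) = (P0, Q0)"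
    using Suc.IH[OF ok0] .
  have r: "rsk_inv (Suc m) (P, Q) = rsk_inv m (P0, Q0) @ [x]" using e Q0_def by simp
  have "rsk (rsk_inv m (P0, Q0) @ [x]) = (P, Q)"
    using rsk_snoc[of "rsk_inv m (P0, Q0)" x] IH rf(2) rc(2) length_rsk_inv[of m] by simp
  then show ?case using r IH dP0 sP Suc.prems unfolding okp_def by auto
qed



lemma tab_ins_Cons_cases:
  obtains (N) "tab_ins x (r # rs) = ((r @ [x]) # rs, 0)" "\<forall>z\<in>set r. \<not> x < z"
  | (S) A y B where "r = A @ y # B" "x < y" "\<forall>z\<in>set A. \<not> x < z"
      "fst (tab_ins x (r # rs)) = (A @ x # B) # fst (tab_ins y rs)" "row_ins x r = (A @ x # B, Some y)"
proof (cases rule: row_ins_cases[of x r])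
  case N then show ?thesis using that(1) by simp
next
  case (S a y b)
  then show ?thesis using that(2)[of a y b] by (auto split: prod.splits)
qed

lemma rw_hd: "z \<in> set r \<Longrightarrow> rw (r # rs) z = 0" by simp
lemma rw_tl: "z \<notin> set r \<Longrightarrow> rw (r # rs) z = Suc (rw rs z)" by simp

lemma tab_ins_rw0: "rw (fst (tab_ins x P)) x = 0"
proof -
  obtain r rs where "fst (tab_ins x P) = r # rs"
  proof (cases P)
    case Nil then show ?thesis using that by simp
  next
    case (Cons r0 rs0) then show ?thesis using that tab_ins_Cons[of x r0 rs0] by fastforce
  qed
  then show ?thesis using tab_ins_hd[of x P] by simp
qed

lemma mem_r':
  assumes "distinct r" "r = A @ y # B" "z \<noteq> x"
  shows "z \<in> set (A @ x # B) \<longleftrightarrow> z \<in> set r \<and> z \<noteq> y"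
  using assms by auto

lemma L3:
  assumes "tabl P" "Suc a \<in> set (concat P)" "a \<notin> set (concat P)"
  shows "rw (fst (tab_ins a P)) a < rw (fst (tab_ins a P)) (Suc a)"
proof (cases P)
  case Nil then show ?thesis using assms by simp
next
  case (Cons r rs)
  have sr: "sorted_wrt (<) r" using assms Cons by simp
  show ?thesis
  proof (cases rule: tab_ins_Cons_cases[of a r rs])
    case N
    then have "Suc a \<notin> set (r @ [a])" by auto
    then show ?thesis using N Cons by simp
  next
    case (S A y B)
    have "Suc a \<notin> set A" using S by auto
    moreover have "Suc a \<notin> set B"
    proof
      assume "Suc a \<in> set B"
      then have "y < Suc a" using sr S(1) by (auto simp: sorted_wrt_append)
      then show False using S(2) by simp
    qed
    ultimately have "Suc a \<notin> set (A @ a # B)" by simp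
    then show ?thesis using S(4) Cons by simp
  qed
qed

lemma L1:
  assumes "tabl P" "distinct (concat P)" "x \<notin> set (concat P)"
    "a \<in> set (concat P)" "Suc a \<in> set (concat P)" "x \<noteq> a" "x \<noteq> Suc a"
    "rw P (Suc a) \<le> rw P a"
  shows "rw (fst (tab_ins x P)) (Suc a) \<le> rw (fst (tab_ins x P)) a"
  using assms
proof (induction x P rule: tab_ins.induct)
  case (1 x) then show ?case by simp
next
  case (2 x r rs)
  have sr: "sorted_wrt (<) r" and dr: "distinct r" using 2(2) by (auto simp: strict_sorted_iff)
  show ?case
  proof (cases rule: tab_ins_Cons_cases[of x r rs])
    case N
    then show ?thesis using 2(7,8,9) by (simp split: if_splits)
  next
    case (S A y B)
    have yrs: "y \<notin> set (concat rs)" using 2(3) S(1) by auto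
    have mr: "z \<in> set (A @ x # B) \<longleftrightarrow> z \<in> set r \<and> z \<noteq> y" if "z \<noteq> x" for z
      using mem_r'[OF dr S(1) that] .
    show ?thesis
    proof (cases "Suc a \<in> set r")
      case True
      show ?thesis
      proof (cases "y = Suc a")
        case yb: True
        have "a \<notin> set r"
        proof
          assume ar: "a \<in> set r"
          have "x < a" using S(2) yb 2(7) by simp
          show False
          proof (cases "a \<in> set A")
            case True then show False using S(3) \<open>x < a\<close> by auto
          next
            case False
            then have "a \<in> set B" using ar S(1) yb by auto
            then have "y < a" using sr S(1) by (auto simp: sorted_wrt_append)
            then show False using yb by simp
          qed
        qed
        then have "a \<notin> set (A @ x # B)" using mr 2(7) by auto
        moreover have "Suc a \<notin> set (A @ x # B)" using mr 2(8) yb by auto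
        moreover have "rw (fst (tab_ins y rs)) (Suc a) = 0" using tab_ins_rw0 yb by simp
        ultimately show ?thesis using S(4) by simp
      next
        case False
        then have "Suc a \<in> set (A @ x # B)" using mr 2(8) True by auto
        then show ?thesis using S(4) by simp
      qed
    next
      case False
      then have ar: "a \<notin> set r" using 2(9) by (auto split: if_splits)
      have ya: "y \<noteq> a" "y \<noteq> Suc a" using S(1) ar False by auto
      have "rw rs (Suc a) \<le> rw rs a" using 2(9) ar False by simp
      moreover have "a \<in> set (concat rs)" "Suc a \<in> set (concat rs)" using 2(5,6) ar False by auto
      ultimately have IH: "rw (fst (tab_ins y rs)) (Suc a) \<le> rw (fst (tab_ins y rs)) a"
        using 2(1)[OF S(5)[symmetric] refl] 2(2,3) yrs ya by simp
      have "a \<notin> set (A @ x # B)" "Suc a \<notin> set (A @ x # B)" using mr 2(7,8) ar False by auto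
      then show ?thesis using S(4) IH by simp
    qed
  qed
qed

lemma L2:
  assumes "tabl P" "distinct (concat P)" "x \<notin> set (concat P)"
    "a \<in> set (concat P)" "Suc a \<in> set (concat P)" "x \<noteq> a" "x \<noteq> Suc a"
    "rw P a < rw P (Suc a)"
  shows "rw (fst (tab_ins x P)) a < rw (fst (tab_ins x P)) (Suc a)"
  using assms
proof (induction x P rule: tab_ins.induct)
  case (1 x) then show ?case by simp
next
  case (2 x r rs)
  have sr: "sorted_wrt (<) r" and dr: "distinct r" using 2(2) by (auto simp: strict_sorted_iff)
  show ?case
  proof (cases rule: tab_ins_Cons_cases[of x r rs])
    case N
    then show ?thesis using 2(7,8,9) by (simp split: if_splits)
  next
    case (S A y B)
    have yrs: "y \<notin> set (concat rs)" using 2(3) S(1) by auto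
    have mr: "z \<in> set (A @ x # B) \<longleftrightarrow> z \<in> set r \<and> z \<noteq> y" if "z \<noteq> x" for z
      using mem_r'[OF dr S(1) that] .
    show ?thesis
    proof (cases "a \<in> set r")
      case True
      have br: "Suc a \<notin> set r" using 2(9) True by auto
      then have br': "Suc a \<notin> set (A @ x # B)" using mr 2(8) by auto
      show ?thesis
      proof (cases "y = a")
        case ya: True
        have "a \<notin> set (A @ x # B)" using mr 2(7) ya by auto
        moreover have "a \<notin> set (concat rs)" using 2(3) True by auto
        moreover have "Suc a \<in> set (concat rs)" using 2(6) br by auto
        moreover have "tabl rs" using 2(2) by simp
        ultimately show ?thesis using S(4) br' L3[of rs a] ya by simp
      next
        case False
        then have "a \<in> set (A @ x # B)" using mr 2(7) True by auto
        then show ?thesis using S(4) br' by simp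
      qed
    next
      case False
      then have br: "Suc a \<notin> set r" using 2(9) by (auto split: if_splits)
      have ya: "y \<noteq> a" "y \<noteq> Suc a" using S(1) br False by auto
      have "rw rs a < rw rs (Suc a)" using 2(9) br False by simp
      moreover have "a \<in> set (concat rs)" "Suc a \<in> set (concat rs)" using 2(5,6) br False by auto
      ultimately have IH: "rw (fst (tab_ins y rs)) a < rw (fst (tab_ins y rs)) (Suc a)"
        using 2(1)[OF S(5)[symmetric] refl] 2(2,3) yrs ya by simp
      have "a \<notin> set (A @ x # B)" "Suc a \<notin> set (A @ x # B)" using mr 2(7,8) br False by auto
      then show ?thesis using S(4) IH by simp
    qed
  qed
qed

definition pos :: "nat list \<Rightarrow> nat \<Rightarrow> nat" where
  "pos v z = (LEAST p. p < length v \<and> v ! p = z)"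

lemma pos_nth: "distinct v \<Longrightarrow> p < length v \<Longrightarrow> pos v (v ! p) = p"
  unfolding pos_def by (rule Least_equality) (auto simp: nth_eq_iff_index_eq)

lemma pos_snoc: "distinct (u @ [x]) \<Longrightarrow> z \<in> set u \<Longrightarrow> pos (u @ [x]) z = pos u z \<and> pos u z < length u"
proof -
  assume d: "distinct (u @ [x])" and z: "z \<in> set u"
  obtain p where p: "p < length u" "u ! p = z" using z by (meson in_set_conv_nth)
  have "pos (u @ [x]) ((u @ [x]) ! p) = p" using pos_nth[OF d] p by simp
  moreover have "pos u (u ! p) = p" using pos_nth[of u p] d p by simp
  ultimately show ?thesis using p by (simp add: nth_append)
qed

lemma pos_last: "distinct (u @ [x]) \<Longrightarrow> pos (u @ [x]) x = length u"
  using pos_nth[of "u @ [x]" "length u"] by simp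

lemma DesL: "distinct v \<Longrightarrow> a \<in> set v \<Longrightarrow> Suc a \<in> set v \<Longrightarrow>
  (rw (fst (rsk v)) a < rw (fst (rsk v)) (Suc a) \<longleftrightarrow> pos v (Suc a) < pos v a)"
proof (induction v rule: rev_induct)
  case Nil then show ?case by simp
next
  case (snoc x u)
  obtain P Q where PQ: "rsk u = (P, Q)" by fastforce
  have P': "fst (rsk (u @ [x])) = fst (tab_ins x P)" using rsk_snoc[of u x] PQ by (simp split: prod.splits)
  have du: "distinct u" and xu: "x \<notin> set u" using snoc.prems by auto
  have ok: "okp (set u) (length u) (P, Q)" using Inv1[OF du] PQ by simp
  then have tP: "tabl P" "distinct (concat P)" "set (concat P) = set u" unfolding okp_def by auto
  show ?case
  proof (cases "x = a")
    case True
    then have "Suc a \<in> set u" using snoc.prems by auto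
    then have "pos (u @ [x]) (Suc a) < pos (u @ [x]) a" using pos_snoc[OF snoc.prems(1)] pos_last[OF snoc.prems(1)] True by simp
    moreover have "rw (fst (tab_ins a P)) a < rw (fst (tab_ins a P)) (Suc a)"
    proof (rule L3[OF tP(1)])
      show "Suc a \<in> set (concat P)" using tP(3) \<open>Suc a \<in> set u\<close> by simp
      show "a \<notin> set (concat P)" using tP(3) xu True by simp
    qed
    ultimately show ?thesis using P' True by simp
  next
    case False
    show ?thesis
    proof (cases "x = Suc a")
      case True
      then have "a \<in> set u" using snoc.prems False by auto
      then have "\<not> pos (u @ [x]) (Suc a) < pos (u @ [x]) a" using pos_snoc[OF snoc.prems(1) \<open>a \<in> set u\<close>] pos_last[OF snoc.prems(1)] True by simp
      moreover have "rw (fst (tab_ins x P)) (Suc a) = 0" using tab_ins_rw0 True by simp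
      ultimately show ?thesis using P' True by simp
    next
      case False2: False
      have au: "a \<in> set u" "Suc a \<in> set u" using snoc.prems False False2 by auto
      have IH: "rw P a < rw P (Suc a) \<longleftrightarrow> pos u (Suc a) < pos u a" using snoc.IH[OF du au] PQ by simp
      have "rw (fst (tab_ins x P)) a < rw (fst (tab_ins x P)) (Suc a) \<longleftrightarrow> rw P a < rw P (Suc a)"
      proof -
        have pre: "x \<notin> set (concat P)" "a \<in> set (concat P)" "Suc a \<in> set (concat P)" using tP(3) xu au by auto
        show ?thesis using L1[OF tP(1,2) pre] L2[OF tP(1,2) pre] False False2 by (meson not_le)
      qed
      then show ?thesis using IH P' pos_snoc[OF snoc.prems(1) au(1)] pos_snoc[OF snoc.prems(1) au(2)] by simp
    qed
  qed
qed



lemma row_of_rw: "z \<in> set (concat T) \<Longrightarrow> row_of T z = rw T z"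
proof (induction T)
  case Nil then show ?case by simp
next
  case (Cons r rs)
  show ?case
  proof (cases "z \<in> set r")
    case True
    then show ?thesis unfolding row_of_def by (intro Least_equality) auto
  next
    case False
    then have zr: "z \<in> set (concat rs)" using Cons.prems by simp
    then obtain s0 where "s0 \<in> set rs" "z \<in> set s0" by auto
    then obtain i where i: "i < length rs" "z \<in> set (rs ! i)" by (metis in_set_conv_nth)
    have "row_of (r # rs) z = Suc (LEAST m. Suc m < length (r # rs) \<and> z \<in> set ((r # rs) ! Suc m))"
      unfolding row_of_def
      by (rule Least_Suc[of _ "Suc i"]) (use i False in auto)
    also have "\<dots> = Suc (row_of rs z)" unfolding row_of_def by simp
    finally show ?thesis using Cons.IH[OF zr] False by simp
  qed
qed

lemma perm_inv_nth: "j < length v \<Longrightarrow> perm_inv v ! j = Suc (pos v (Suc j))"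
proof -
  assume j: "j < length v"
  have "[1..<Suc (length v)] ! j = Suc j" using j by (simp add: nth_upt del: upt_Suc)
  then show ?thesis unfolding perm_inv_def pos_def using j by (simp del: upt_Suc)
qed

lemma length_perm_inv: "length (perm_inv v) = length v"
  unfolding perm_inv_def by (simp del: upt_Suc)

lemma perm_des_pos: "perm_des (perm_inv v) = {i. 1 \<le> i \<and> i < length v \<and> pos v (Suc i) < pos v i}"
proof -
  have "i - 1 < length v \<and> Suc (i - 1) = i" if "1 \<le> i" "i < length v" for i using that by auto
  then show ?thesis unfolding perm_des_def length_perm_inv
    by (auto simp: perm_inv_nth)
qed

lemma des_eq: "is_perm n v \<Longrightarrow> perm_des (perm_inv v) = tab_des (fst (rsk v))"
proof -
  assume pv: "is_perm n v"
  then have dv: "distinct v" "length v = n" "set v = {1..n}" unfolding is_perm_def by auto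
  obtain P Q where PQ: "rsk v = (P, Q)" by fastforce
  have ok: "okp (set v) (length v) (P, Q)" using Inv1[OF dv(1)] PQ by simp
  then have tP: "distinct (concat P)" "set (concat P) = {1..n}" unfolding okp_def using dv by auto
  have sl: "sum_list (shape P) = n"
  proof -
    have "sum_list (shape P) = length (concat P)" by (simp add: shape_def length_concat)
    also have "\<dots> = card (set (concat P))" using distinct_card[OF tP(1)] by simp
    finally show ?thesis using tP(2) by simp
  qed
  have "i \<in> perm_des (perm_inv v) \<longleftrightarrow> i \<in> tab_des P" for i
  proof (cases "1 \<le> i \<and> i < n")
    case True
    then have m: "i \<in> set v" "Suc i \<in> set v" "i \<in> set (concat P)" "Suc i \<in> set (concat P)" using dv tP by auto
    have "row_of P (Suc i) > row_of P i \<longleftrightarrow> rw P i < rw P (Suc i)" using row_of_rw[OF m(3)] row_of_rw[OF m(4)] by simp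
    also have "\<dots> \<longleftrightarrow> pos v (Suc i) < pos v i" using DesL[OF dv(1) m(1,2)] PQ by simp
    finally show ?thesis unfolding perm_des_pos tab_des_def sl using True dv by auto
  next
    case False
    then show ?thesis unfolding perm_des_pos tab_des_def sl using dv by auto
  qed
  then show ?thesis using PQ by auto
qed

definition colcond :: "tableau \<Rightarrow> bool" where
  "colcond T \<longleftrightarrow> (\<forall>i j. Suc i < length T \<and> j < length (T ! Suc i) \<longrightarrow> T ! i ! j < T ! Suc i ! j)"

lemma colcond_Cons: "colcond (r # rs) \<longleftrightarrow> (\<forall>s ss. rs = s # ss \<longrightarrow> (\<forall>j<length s. r ! j < s ! j)) \<and> colcond rs"
proof
  assume c: "colcond (r # rs)"
  have "\<forall>s ss. rs = s # ss \<longrightarrow> (\<forall>j<length s. r ! j < s ! j)"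
    using c unfolding colcond_def by (metis Suc_less_eq length_Cons nth_Cons_0 nth_Cons_Suc zero_less_Suc)
  moreover have "colcond rs" unfolding colcond_def
  proof (intro allI impI)
    fix i j assume "Suc i < length rs \<and> j < length (rs ! Suc i)"
    then show "rs ! i ! j < rs ! Suc i ! j" using c[unfolded colcond_def, rule_format, of "Suc i" j] by simp
  qed
  ultimately show "(\<forall>s ss. rs = s # ss \<longrightarrow> (\<forall>j<length s. r ! j < s ! j)) \<and> colcond rs" by blast
next
  assume c: "(\<forall>s ss. rs = s # ss \<longrightarrow> (\<forall>j<length s. r ! j < s ! j)) \<and> colcond rs"
  show "colcond (r # rs)" unfolding colcond_def
  proof (intro allI impI)
    fix i j assume a: "Suc i < length (r # rs) \<and> j < length ((r # rs) ! Suc i)"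
    show "(r # rs) ! i ! j < (r # rs) ! Suc i ! j"
    proof (cases i)
      case 0
      then show ?thesis using a c by (cases rs) auto
    next
      case (Suc i')
      then show ?thesis using a c[THEN conjunct2, unfolded colcond_def, rule_format, of i' j] by simp
    qed
  qed
qed

lemma tabl_iff: "pshape (shape T) \<Longrightarrow> tabl T \<longleftrightarrow> (\<forall>r\<in>set T. sorted_wrt (<) r) \<and> colcond T"
proof (induction T)
  case Nil then show ?case by (simp add: colcond_def)
next
  case (Cons r rs)
  have ps: "pshape (shape rs)" using Cons.prems by (simp add: pshape_def shape_def)
  have rne: "r \<noteq> []" using Cons.prems by (auto simp: pshape_def shape_def)
  have len: "length s \<le> length r" if "rs = s # ss" for s ss using Cons.prems that by (simp add: pshape_def shape_def)
  show ?case using Cons.IH[OF ps] rne len unfolding colcond_Cons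
    by (auto simp: domr_def split: list.splits)
qed

lemma SYT_iff: "is_partition n lam \<Longrightarrow> shape T = lam \<Longrightarrow>
   is_SYT lam T \<longleftrightarrow> tabl T \<and> distinct (concat T) \<and> set (concat T) = {1..n}"
proof -
  assume p: "is_partition n lam" and s: "shape T = lam"
  have "pshape (shape T)" using p s unfolding is_partition_def pshape_def by simp
  then show ?thesis using tabl_iff[of T] p s unfolding is_SYT_def is_partition_def colcond_def by auto
qed



lemma count_bij:
  assumes p: "is_partition n lam"
  shows "bij_betw rsk {v. is_perm n v \<and> tab_des (fst (rsk v)) = D \<and> shape (snd (rsk v)) = lam}
     ({P. is_SYT lam P \<and> tab_des P = D} \<times> {Q. is_SYT lam Q})"
proof -
  let ?S = "{v. is_perm n v \<and> tab_des (fst (rsk v)) = D \<and> shape (snd (rsk v)) = lam}"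
  have okv: "okp {1..n} n (rsk v)" if "is_perm n v" for v
  proof -
    have "distinct v" "length v = n" "set v = {1..n}" using that unfolding is_perm_def by simp_all
    then show ?thesis using Inv1[of v] by simp
  qed
  have inj: "inj_on rsk ?S"
  proof (rule inj_onI)
    fix v1 v2 assume a: "v1 \<in> ?S" "v2 \<in> ?S" "rsk v1 = rsk v2"
    have "is_perm n v1" "is_perm n v2" using a(1,2) by blast+
    then have d: "distinct v1" "length v1 = n" "distinct v2" "length v2 = n" unfolding is_perm_def by simp_all
    have e1: "rsk_inv n (rsk v1) = v1" using Inv1[OF d(1)] d(2) by blast
    have e2: "rsk_inv n (rsk v2) = v2" using Inv1[OF d(3)] d(4) by blast
    have "v1 = rsk_inv n (rsk v1)" using e1 by (rule sym)
    also have "\<dots> = rsk_inv n (rsk v2)" using a(3) by (rule arg_cong)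
    also have "\<dots> = v2" by (rule e2)
    finally show "v1 = v2" .
  qed
  have img: "rsk ` ?S = {P. is_SYT lam P \<and> tab_des P = D} \<times> {Q. is_SYT lam Q}"
  proof
    show "rsk ` ?S \<subseteq> {P. is_SYT lam P \<and> tab_des P = D} \<times> {Q. is_SYT lam Q}"
    proof
      fix PQ assume "PQ \<in> rsk ` ?S"
      then obtain v where v: "v \<in> ?S" "PQ = rsk v" by blast
      obtain P Q where PQ: "PQ = (P, Q)" by fastforce
      have o: "okp {1..n} n (P, Q)" using okv v PQ by simp
      have "v \<in> ?S" by (fact v(1))
      have rv: "rsk v = (P, Q)" using v(2) PQ by simp
      then have sQ: "shape Q = lam" and tD: "tab_des P = D" using \<open>v \<in> ?S\<close> by simp_all
      then have sP: "shape P = lam" using o unfolding okp_def by simp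
      have "is_SYT lam P" using SYT_iff[OF p sP] o unfolding okp_def by simp
      moreover have "is_SYT lam Q" using SYT_iff[OF p sQ] o unfolding okp_def by simp
      moreover note tD
      ultimately show "PQ \<in> {P. is_SYT lam P \<and> tab_des P = D} \<times> {Q. is_SYT lam Q}" using PQ by simp
    qed
  next
    show "{P. is_SYT lam P \<and> tab_des P = D} \<times> {Q. is_SYT lam Q} \<subseteq> rsk ` ?S"
    proof
      fix PQ assume a: "PQ \<in> {P. is_SYT lam P \<and> tab_des P = D} \<times> {Q. is_SYT lam Q}"
      obtain P Q where PQ: "PQ = (P, Q)" by fastforce
      have sP: "shape P = lam" and sQ: "shape Q = lam" using a PQ unfolding is_SYT_def by auto
      have "is_SYT lam P" "is_SYT lam Q" using a PQ by auto
      then have "tabl P \<and> distinct (concat P) \<and> set (concat P) = {1..n}" "tabl Q \<and> distinct (concat Q) \<and> set (concat Q) = {1..n}"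
        using SYT_iff[OF p sP] SYT_iff[OF p sQ] by simp_all
      then have o: "okp {1..n} n (P, Q)" using sP sQ unfolding okp_def by simp
      define v where "v = rsk_inv n (P, Q)"
      have v: "distinct v" "set v = {1..n}" "rsk v = (P, Q)" "length v = n"
        using Inv2[OF o] length_rsk_inv[of n "(P, Q)"] unfolding v_def by simp_all
      have "v \<in> ?S" using v a PQ sQ unfolding is_perm_def by simp
      moreover have "PQ = rsk v" using v PQ by simp
      ultimately show "PQ \<in> rsk ` ?S" by (rule rev_image_eqI)
    qed
  qed
  show ?thesis using inj img unfolding bij_betw_def by simp
qed



definition lexl :: "nat list \<Rightarrow> nat \<Rightarrow> nat \<Rightarrow> bool" where
  "lexl J p p' \<longleftrightarrow> J ! p < J ! p' \<or> (J ! p = J ! p' \<and> p < p')"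

definition ordp :: "nat list \<Rightarrow> nat list \<Rightarrow> bool" where
  "ordp v J \<longleftrightarrow> (\<forall>p<length v. \<forall>p'<length v. v ! p < v ! p' \<longleftrightarrow> lexl J p p')"

lemma word_perm_nth: "p < length J \<Longrightarrow> word_perm J ! p = Suc (card {t. t < length J \<and> lexl J t p})"
  unfolding word_perm_def lexl_def by simp

lemma length_word_perm: "length (word_perm J) = length J"
  unfolding word_perm_def by simp

lemma wp_order:
  assumes "p < length J" "p' < length J"
  shows "word_perm J ! p < word_perm J ! p' \<longleftrightarrow> lexl J p p'"
proof -
  let ?C = "\<lambda>p. {t. t < length J \<and> lexl J t p}"
  have lt: "card (?C a) < card (?C b)" if "lexl J a b" "a < length J" for a b
  proof (rule psubset_card_mono)
    show "finite (?C b)" by simp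
    have "?C a \<subseteq> ?C b" using that(1) unfolding lexl_def by auto
    moreover have "a \<in> ?C b" "a \<notin> ?C a" using that unfolding lexl_def by auto
    ultimately show "?C a \<subset> ?C b" by blast
  qed
  show ?thesis
  proof
    assume "word_perm J ! p < word_perm J ! p'"
    then have "card (?C p) < card (?C p')" using word_perm_nth assms by simp
    show "lexl J p p'"
    proof (rule ccontr)
      assume nl: "\<not> lexl J p p'"
      have "p \<noteq> p'" using \<open>card (?C p) < card (?C p')\<close> by auto
      then have "lexl J p' p" using nl unfolding lexl_def by auto
      then have "card (?C p') < card (?C p)" using lt[of p' p] assms by simp
      then show False using \<open>card (?C p) < card (?C p')\<close> by simp
    qed
  next
    assume "lexl J p p'"
    then show "word_perm J ! p < word_perm J ! p'" using lt[of p p'] word_perm_nth assms by simp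
  qed
qed

lemma wp_char:
  assumes v: "is_perm n v" and J: "length J = n" and o: "ordp v J"
  shows "word_perm J = v"
proof (rule nth_equalityI)
  show "length (word_perm J) = length v" using v J length_word_perm unfolding is_perm_def by simp
  fix p assume "p < length (word_perm J)"
  then have p: "p < n" using J length_word_perm by simp
  have dv: "distinct v" "length v = n" "set v = {1..n}" using v unfolding is_perm_def by auto
  let ?C = "{t. t < n \<and> lexl J t p}"
  have C: "?C = {t. t < n \<and> v ! t < v ! p}" using o dv p unfolding ordp_def by auto
  have img: "(\<lambda>t. v ! t) ` {t. t < n \<and> v ! t < v ! p} = {1..<v ! p}"
  proof
    show "(\<lambda>t. v ! t) ` {t. t < n \<and> v ! t < v ! p} \<subseteq> {1..<v ! p}"
    proof
      fix k assume "k \<in> (\<lambda>t. v ! t) ` {t. t < n \<and> v ! t < v ! p}"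
      then obtain t where "t < n" "v ! t < v ! p" "k = v ! t" by blast
      moreover have "v ! t \<in> {1..n}" using \<open>t < n\<close> dv nth_mem by (metis)
      ultimately show "k \<in> {1..<v ! p}" by auto
    qed
  next
    show "{1..<v ! p} \<subseteq> (\<lambda>t. v ! t) ` {t. t < n \<and> v ! t < v ! p}"
    proof
      fix k assume k: "k \<in> {1..<v ! p}"
      have "v ! p \<in> {1..n}" using p dv nth_mem by metis
      then have "k \<in> set v" using k dv by auto
      then obtain t where "t < n" "v ! t = k" using dv by (metis in_set_conv_nth)
      then show "k \<in> (\<lambda>t. v ! t) ` {t. t < n \<and> v ! t < v ! p}" using k by force
    qed
  qed
  have inj: "inj_on (\<lambda>t. v ! t) {t. t < n \<and> v ! t < v ! p}"
    using inj_on_nth[of v "{t. t < n \<and> v ! t < v ! p}"] dv by simp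
  have "card ?C = v ! p - 1" using card_image[OF inj] img C by simp
  moreover have "v ! p \<ge> 1" using p dv nth_mem by (metis atLeastAtMost_iff)
  ultimately show "word_perm J ! p = v ! p" using word_perm_nth[of p J] p J by simp
qed

lemma JS_char: "is_perm n v \<Longrightarrow> {J. length J = n \<and> word_perm J = v} = {J. length J = n \<and> ordp v J}"
proof (intro set_eqI iffI)
  fix J assume v: "is_perm n v" and "J \<in> {J. length J = n \<and> word_perm J = v}"
  then have J: "length J = n" "word_perm J = v" by auto
  have "length v = n" using v unfolding is_perm_def by simp
  then have "ordp v J" unfolding ordp_def using wp_order[of _ J] J by auto
  then show "J \<in> {J. length J = n \<and> ordp v J}" using J by simp
next
  fix J assume v: "is_perm n v" and "J \<in> {J. length J = n \<and> ordp v J}"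
  then show "J \<in> {J. length J = n \<and> word_perm J = v}" using wp_char[OF v] by auto
qed



definition Phi :: "nat list \<Rightarrow> nat list \<Rightarrow> nat list \<Rightarrow> nat list" where
  "Phi v w J = map (\<lambda>p. J ! pos v (w ! p)) [0..<length w]"

lemma pos_in: "k \<in> set v \<Longrightarrow> pos v k < length v \<and> v ! pos v k = k"
proof -
  assume "k \<in> set v"
  then obtain p where "p < length v" "v ! p = k" by (metis in_set_conv_nth)
  then show ?thesis unfolding pos_def by (metis (mono_tags, lifting) LeastI)
qed

lemma transfer_ord:
  assumes v: "is_perm n v" and w: "is_perm n w"
    and des: "\<forall>i. 1 \<le> i \<and> i < n \<longrightarrow> (pos v (Suc i) < pos v i \<longleftrightarrow> pos w (Suc i) < pos w i)"
    and J: "length J = n" and o: "ordp v J"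
  shows "ordp w (Phi v w J)"
proof -
  have dv: "distinct v" "length v = n" "set v = {1..n}" using v unfolding is_perm_def by auto
  have dw: "distinct w" "length w = n" "set w = {1..n}" using w unfolding is_perm_def by auto
  define c where "c k = J ! pos v k" for k
  have pv: "pos v k < n" "v ! pos v k = k" if "k \<in> {1..n}" for k using pos_in[of k v] that dv by auto
  have pw: "pos w k < n" "w ! pos w k = k" if "k \<in> {1..n}" for k using pos_in[of k w] that dw by auto
  have Prv: "c k < c k' \<or> c k = c k' \<and> pos v k < pos v k'" if "1 \<le> k" "k < k'" "k' \<le> n" for k k'
  proof -
    have kk: "k \<in> {1..n}" "k' \<in> {1..n}" using that by auto
    have "v ! pos v k < v ! pos v k'" using pv(2)[OF kk(1)] pv(2)[OF kk(2)] that by simp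
    moreover have "pos v k < length v" "pos v k' < length v" using pv(1)[OF kk(1)] pv(1)[OF kk(2)] dv by auto
    ultimately have "lexl J (pos v k) (pos v k')" using o unfolding ordp_def by blast
    then show ?thesis unfolding lexl_def c_def by simp
  qed
  have stepw: "c k < c (Suc k) \<or> c k = c (Suc k) \<and> pos w k < pos w (Suc k)" if "1 \<le> k" "k < n" for k
  proof -
    have "c k < c (Suc k) \<or> c k = c (Suc k) \<and> pos v k < pos v (Suc k)" using Prv[of k "Suc k"] that by simp
    moreover have "pos w k \<noteq> pos w (Suc k)" using pw[of k] pw[of "Suc k"] that by force
    ultimately show ?thesis using des that by auto
  qed
  have Prw: "k < k' \<longrightarrow> k' \<le> n \<longrightarrow> c k < c k' \<or> c k = c k' \<and> pos w k < pos w k'" if "1 \<le> k" for k k'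
  proof (induction k')
    case 0 then show ?case by simp
  next
    case (Suc k')
    show ?case
    proof (intro impI)
      assume a: "k < Suc k'" "Suc k' \<le> n"
      show "c k < c (Suc k') \<or> c k = c (Suc k') \<and> pos w k < pos w (Suc k')"
      proof (cases "k = k'")
        case True then show ?thesis using stepw[of k] a that by simp
      next
        case False
        then have "c k < c k' \<or> c k = c k' \<and> pos w k < pos w k'" using Suc a by simp
        moreover have "c k' < c (Suc k') \<or> c k' = c (Suc k') \<and> pos w k' < pos w (Suc k')"
          using stepw[of k'] a that False by simp
        ultimately show ?thesis by auto
      qed
    qed
  qed
  have Phin: "Phi v w J ! p = c (w ! p)" if "p < n" for p using that dw unfolding Phi_def c_def by simp
  have wr: "w ! p \<in> {1..n}" if "p < n" for p using that dw nth_mem by metis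
  have pwn: "pos w (w ! p) = p" if "p < n" for p using pos_nth[of w p] dw that by simp
  show ?thesis unfolding ordp_def
  proof (intro allI impI)
    fix p p' assume pp: "p < length w" "p' < length w"
    then have pn: "p < n" "p' < n" using dw by auto
    let ?k = "w ! p" and ?k' = "w ! p'"
    have lx: "lexl (Phi v w J) p p' \<longleftrightarrow> c ?k < c ?k' \<or> c ?k = c ?k' \<and> pos w ?k < pos w ?k'"
      unfolding lexl_def using Phin pn pwn by simp
    have fw: "c a < c b \<or> c a = c b \<and> pos w a < pos w b" if "a \<in> {1..n}" "b \<in> {1..n}" "a < b" for a b
      using Prw[of a b] that by auto
    show "w ! p < w ! p' \<longleftrightarrow> lexl (Phi v w J) p p'"
    proof
      assume "w ! p < w ! p'"
      then show "lexl (Phi v w J) p p'" using lx fw wr pn by simp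
    next
      assume l: "lexl (Phi v w J) p p'"
      show "w ! p < w ! p'"
      proof (rule ccontr)
        assume "\<not> ?thesis"
        then consider "?k = ?k'" | "?k' < ?k" by linarith
        then show False
        proof cases
          case 1
          then have "p = p'" using pwn pn by metis
          then show False using l unfolding lexl_def by simp
        next
          case 2
          then have "c ?k' < c ?k \<or> c ?k' = c ?k \<and> pos w ?k' < pos w ?k" using fw wr pn by simp
          then show False using l lx by auto
        qed
      qed
    qed
  qed
qed

lemma Phi_inv:
  assumes v: "is_perm n v" and w: "is_perm n w" and J: "length J = n"
  shows "Phi w v (Phi v w J) = J"
proof (rule nth_equalityI)
  have dv: "distinct v" "length v = n" "set v = {1..n}" using v unfolding is_perm_def by auto
  have dw: "distinct w" "length w = n" "set w = {1..n}" using w unfolding is_perm_def by auto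
  show "length (Phi w v (Phi v w J)) = length J" using dv J unfolding Phi_def by simp
  fix p assume "p < length (Phi w v (Phi v w J))"
  then have p: "p < n" using dv unfolding Phi_def by simp
  have vp: "v ! p \<in> {1..n}" using p dv nth_mem by metis
  then have q: "pos w (v ! p) < n" "w ! pos w (v ! p) = v ! p" using pos_in[of "v ! p" w] dw by auto
  have "Phi w v (Phi v w J) ! p = Phi v w J ! pos w (v ! p)" unfolding Phi_def using p dv by simp
  also have "\<dots> = J ! pos v (w ! pos w (v ! p))" unfolding Phi_def using q dw by simp
  also have "\<dots> = J ! p" using q pos_nth[of v p] dv p by simp
  finally show "Phi w v (Phi v w J) ! p = J ! p" .
qed

definition wt :: "(nat \<Rightarrow> real) \<Rightarrow> nat \<Rightarrow> nat list \<Rightarrow> real" where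
  "wt q n J = (\<Prod>p<n. q (J ! p))"

lemma Phi_wt:
  assumes v: "is_perm n v" and w: "is_perm n w"
  shows "wt q n (Phi v w J) = wt q n J"
proof -
  have dv: "distinct v" "length v = n" "set v = {1..n}" using v unfolding is_perm_def by auto
  have dw: "distinct w" "length w = n" "set w = {1..n}" using w unfolding is_perm_def by auto
  define s where "s p = pos v (w ! p)" for p
  have sn: "s p < n" if "p < n" for p
  proof -
    have "w ! p \<in> set v" using dw dv that nth_mem by metis
    then show ?thesis using pos_in[of "w ! p" v] dv unfolding s_def by simp
  qed
  have inj: "inj_on s {..<n}"
  proof (rule inj_onI)
    fix a b assume ab: "a \<in> {..<n}" "b \<in> {..<n}" "s a = s b"
    have "w ! a \<in> set v" "w ! b \<in> set v" using dw dv ab nth_mem by (metis lessThan_iff)+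
    then have "v ! s a = w ! a" "v ! s b = w ! b" using pos_in unfolding s_def by auto
    then have "w ! a = w ! b" using ab by simp
    then show "a = b" using dw ab nth_eq_iff_index_eq by auto
  qed
  have bij: "bij_betw s {..<n} {..<n}"
    using inj sn endo_inj_surj[of "{..<n}" s] unfolding bij_betw_def by auto
  have "wt q n (Phi v w J) = (\<Prod>p<n. q (J ! s p))" unfolding wt_def Phi_def s_def using dw by simp
  also have "\<dots> = (\<Prod>p<n. q (J ! p))" using prod.reindex_bij_betw[OF bij, of "\<lambda>t. q (J ! t)"] by simp
  finally show ?thesis unfolding wt_def .
qed



lemma S_finite: "finite {v. is_perm n v \<and> Q v}"
proof (rule finite_subset)
  show "{v. is_perm n v \<and> Q v} \<subseteq> {xs. set xs \<subseteq> {1..n} \<and> length xs = n}" unfolding is_perm_def by auto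
  show "finite {xs. set xs \<subseteq> {1..n} \<and> length xs = (n::nat)}" by (rule finite_lists_length_eq) simp
qed

lemma wt_Cons: "wt q (Suc n) (a # J) = q a * wt q n J"
  unfolding wt_def by (subst prod.lessThan_Suc_shift) simp

lemma wt_nonneg: "\<forall>i. q i \<ge> 0 \<Longrightarrow> wt q n J \<ge> 0"
  unfolding wt_def by (simp add: prod_nonneg)

lemma wt_bound:
  assumes q0: "\<forall>i. q i \<ge> 0" and qA: "\<And>A. finite A \<Longrightarrow> sum q A \<le> 1"
  shows "finite F \<Longrightarrow> F \<subseteq> {J. length J = n} \<Longrightarrow> sum (wt q n) F \<le> 1"
proof (induction n arbitrary: F)
  case 0
  then have "F \<subseteq> {[]}" by auto
  then have "F = {} \<or> F = {[]}" by auto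
  then show ?case by (auto simp: wt_def)
next
  case (Suc n)
  let ?f = "\<lambda>(a, J). a # J"
  let ?A = "hd ` F" and ?G = "tl ` F"
  have sub: "F \<subseteq> ?f ` (?A \<times> ?G)"
  proof
    fix J assume J: "J \<in> F"
    then have "length J = Suc n" using Suc.prems by auto
    then have "J = hd J # tl J" by (cases J) auto
    then show "J \<in> ?f ` (?A \<times> ?G)" using J by force
  qed
  have finAG: "finite (?A \<times> ?G)" using Suc.prems by simp
  have injf: "inj_on ?f (?A \<times> ?G)" by (rule inj_onI) auto
  have "sum (wt q (Suc n)) F \<le> sum (wt q (Suc n)) (?f ` (?A \<times> ?G))"
    by (rule sum_mono2) (use finAG sub wt_nonneg[OF q0] in auto)
  also have "\<dots> = sum (wt q (Suc n) \<circ> ?f) (?A \<times> ?G)" by (rule sum.reindex[OF injf])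
  also have "\<dots> = (\<Sum>(a, J)\<in>?A \<times> ?G. q a * wt q n J)"
    by (rule sum.cong) (auto simp: wt_Cons)
  also have "\<dots> = (\<Sum>a\<in>?A. \<Sum>J\<in>?G. q a * wt q n J)" by (rule sum.cartesian_product[symmetric])
  also have "\<dots> = sum q ?A * sum (wt q n) ?G" by (simp add: sum_product)
  also have "\<dots> \<le> 1 * 1"
  proof (rule mult_mono)
    show "sum q ?A \<le> 1" using qA Suc.prems by simp
    have "?G \<subseteq> {J. length J = n}" using Suc.prems by auto
    then show "sum (wt q n) ?G \<le> 1" using Suc.IH Suc.prems by simp
    show "0 \<le> sum (wt q n) ?G" using wt_nonneg[OF q0] by (simp add: sum_nonneg)
  qed simp
  finally show ?case by simp
qed

lemma wt_summable:
  assumes q0: "\<forall>i. q i \<ge> 0" and qs: "q sums 1"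
  shows "wt q n summable_on {J. length J = n}"
proof (rule nonneg_bdd_above_summable_on)
  show "\<And>x. x \<in> {J. length J = n} \<Longrightarrow> 0 \<le> wt q n x" using wt_nonneg[OF q0] by simp
  have qA: "sum q A \<le> 1" if "finite A" for A
  proof -
    have "sum q A \<le> suminf q" using sum_le_suminf[OF sums_summable[OF qs] that] q0 by simp
    then show ?thesis using sums_unique[OF qs] by simp
  qed
  show "bdd_above (sum (wt q n) ` {F. F \<subseteq> {J. length J = n} \<and> finite F})"
    by (rule bdd_aboveI[of _ 1]) (use wt_bound[OF q0 qA] in auto)
qed

lemma equal_prob:
  assumes v: "is_perm n v" and w: "is_perm n w" and d: "perm_des (perm_inv v) = perm_des (perm_inv w)"
  shows "infsum (wt q n) {J. length J = n \<and> word_perm J = v} = infsum (wt q n) {J. length J = n \<and> word_perm J = w}"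
proof -
  have lv: "length v = n" "length w = n" using v w unfolding is_perm_def by auto
  have des: "\<forall>i. 1 \<le> i \<and> i < n \<longrightarrow> (pos v (Suc i) < pos v i \<longleftrightarrow> pos w (Suc i) < pos w i)"
  proof (intro allI impI)
    fix i assume i: "1 \<le> i \<and> i < n"
    have "i \<in> perm_des (perm_inv v) \<longleftrightarrow> i \<in> perm_des (perm_inv w)" using d by simp
    then show "pos v (Suc i) < pos v i \<longleftrightarrow> pos w (Suc i) < pos w i" unfolding perm_des_pos using i lv by simp
  qed
  have des': "\<forall>i. 1 \<le> i \<and> i < n \<longrightarrow> (pos w (Suc i) < pos w i \<longleftrightarrow> pos v (Suc i) < pos v i)" using des by simp
  let ?JV = "{J. length J = n \<and> ordp v J}" and ?JW = "{J. length J = n \<and> ordp w J}"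
  have bij: "bij_betw (Phi v w) ?JV ?JW"
  proof (rule bij_betw_byWitness[where f' = "Phi w v"])
    show "\<forall>a\<in>?JV. Phi w v (Phi v w a) = a" using Phi_inv[OF v w] by simp
    show "\<forall>a\<in>?JW. Phi v w (Phi w v a) = a" using Phi_inv[OF w v] by simp
    show "Phi v w ` ?JV \<subseteq> ?JW" using transfer_ord[OF v w des] lv by (auto simp: Phi_def)
    show "Phi w v ` ?JW \<subseteq> ?JV" using transfer_ord[OF w v des'] lv by (auto simp: Phi_def)
  qed
  have "infsum (wt q n) ?JW = infsum (\<lambda>J. wt q n (Phi v w J)) ?JV"
    using infsum_reindex_bij_betw[OF bij, of "wt q n"] by simp
  also have "\<dots> = infsum (wt q n) ?JV" by (rule infsum_cong) (simp add: Phi_wt[OF v w])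
  finally show ?thesis using JS_char[OF v] JS_char[OF w] by simp
qed

theorem lemma3p3:
  fixes q :: "nat \<Rightarrow> real" and n :: nat and D :: "nat set"
    and lam :: "nat list" and w :: "nat list"
  assumes "\<forall>i. q i \<ge> 0" and "q sums 1"
    and "D \<subseteq> {1..n-1}"
    and "is_partition n lam"
    and "beta lam D \<noteq> 0"
    and "is_perm n w"
    and "perm_des (perm_inv w) = D"
    and "shape (fst (rsk w)) = lam"
  shows "shuffle_prob q n {w} =
    shuffle_prob q n {v. is_perm n v \<and> tab_des (fst (rsk v)) = D \<and> shape (snd (rsk v)) = lam}
      / (real (beta lam D) * real (flam lam))"
proof -
  let ?S = "{v. is_perm n v \<and> tab_des (fst (rsk v)) = D \<and> shape (snd (rsk v)) = lam}"
  let ?B = "{P. is_SYT lam P \<and> tab_des P = D}" and ?F = "{Q. is_SYT lam Q}"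
  let ?JS = "\<lambda>v. {J. length J = n \<and> word_perm J = v}"
  have fin: "finite ?S" by (rule S_finite)
  have bij: "bij_betw rsk ?S (?B \<times> ?F)" by (rule count_bij[OF assms(4)])
  have cS: "card ?S = beta lam D * flam lam"
    using bij_betw_same_card[OF bij] unfolding beta_def flam_def by (simp add: card_cartesian_product)
  have "card ?B \<noteq> 0" using assms(5) unfolding beta_def by simp
  then have Bne: "?B \<noteq> {}" by (metis card.empty)
  have "finite (?B \<times> ?F)" using bij_betw_finite[OF bij] fin by simp
  then have fF: "finite ?F" using Bne finite_cartesian_productD2 by blast
  have "?F \<noteq> {}" using Bne by auto
  then have "flam lam \<noteq> 0" using fF unfolding flam_def by simp
  then have nz: "real (beta lam D) * real (flam lam) \<noteq> 0" using assms(5) by simp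
  have sp: "shuffle_prob q n X = infsum (wt q n) {J. length J = n \<and> word_perm J \<in> X}" for X
    unfolding shuffle_prob_def wt_def by simp
  define p where "p = shuffle_prob q n {w}"
  have p: "p = infsum (wt q n) (?JS w)" unfolding p_def sp by simp
  have eqv: "infsum (wt q n) (?JS v) = p" if "v \<in> ?S" for v
  proof -
    have v: "is_perm n v" using that by simp
    have "perm_des (perm_inv v) = D" using des_eq[OF v] that by simp
    then show ?thesis using equal_prob[OF v assms(6), of q] assms(7) p by simp
  qed
  have U: "{J. length J = n \<and> word_perm J \<in> ?S} = (\<Union>v\<in>?S. ?JS v)" by auto
  have summ: "wt q n summable_on ?JS v" for v
    by (rule summable_on_subset_banach[OF wt_summable[OF assms(1,2)]]) auto
  have "shuffle_prob q n ?S = infsum (wt q n) (\<Union>v\<in>?S. ?JS v)" unfolding sp U ..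
  also have "\<dots> = (\<Sum>v\<in>?S. infsum (wt q n) (?JS v))"
    by (rule sum_infsum[symmetric]) (use fin summ in auto)
  also have "\<dots> = (\<Sum>v\<in>?S. p)" using eqv by simp
  also have "\<dots> = real (card ?S) * p" by simp
  finally have "shuffle_prob q n ?S = real (beta lam D) * real (flam lam) * p" using cS by simp
  then show ?thesis using nz p_def by simp
qed


end
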